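(* Let $G$ be a connected graph of order $n\ge 3$. Then: (i) $\gamma_{oidR}(G)=3$ if and only if $G$ is a star; (ii) $\gamma_{oidR}(G)=4$ if and only if $G\in\mathcal{G}$; (iii) $\gamma_{oidR}(G)=5$ if and only if $G\in \bigcup_{i=1}^{6}\mathcal{H}_i$, where the families $\mathcal{G}$ and $\mathcal{H}_1,\dots,\mathcal{H}_6$ are as defined in the context.
   Context: All graphs are finite and simple. A double Roman dominating function (DRD function) of $G$ is $f:V(G)\to\{0,1,2,3\}$ such that every vertex $v$ with $f(v)=0$ has a neighbor $u$ with $f(u)=3$ or two neighbors $u,w$ with $f(u)=f(w)=2$, and every vertex $v$ with $f(v)=1$ has a neighbor assigned at least $2$. An outer independent double Roman dominating function (OIDRD function) is a DRD function $f$ such that $V_0=\{v: f(v)=0\}$ is an independent set. $\gamma_{oidR}(G)$ is the minimum weight $\sum_{v}f(v)$ over all OIDRD functions of $G$. The family $\mathcal{G}$ consists of all graphs of the following three forms: $G_1$: two adjacent vertices $v_1,v_2$, some number $\ell\ge1$ of leaves attached to $v_1$, and $k\ge 1$ further vertices $w_1,\dots,w_k$ each adjacent exactly to $v_1$ and $v_2$; $G_2$: two adjacent vertices $v_1,v_2$ and $k\ge1$ vertices $w_1,\dots,w_k$ each adjacent exactly to $v_1$ and $v_2$; $G_3$: two nonadjacent vertices $v_1,v_2$ and $k\ge 2$ vertices $w_1,\dots,w_k$ each adjacent exactly to $v_1$ and $v_2$. Convention: for vertices $v_1,\dots,v_r$, $V_{v_1,\dots,v_r}$ denotes a (possibly empty,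 unless stated otherwise) set of new vertices, disjoint from everything else, each vertex $v$ of which satisfies $N(v)=\{v_1,\dots,v_r\}$. Each graph in the families below consists exactly of the starting vertices and the added sets. $\mathcal{H}_1$: start with a path $abc$ (edges $ab,bc$ only) and add sets $V_b,V_{a,b},V_{b,c},V_{a,b,c}$ such that one of: ($a_1$) $V_{a,b}=V_{b,c}=\emptyset$ and $|V_{a,b,c}|\ge2$; ($b_1$) exactly one of $V_{a,b},V_{b,c}$ is empty and $V_{a,b,c}\ne\emptyset$; ($c_1$) $V_{a,b}\ne\emptyset$ and $V_{b,c}\ne\emptyset$. $\mathcal{H}_2$: start with a triangle $abca$ and add sets $V_b,V_{a,b},V_{b,c},V_{a,b,c}$ such that ($a_2$) $V_{a,b,c}\neq\emptyset$ or ($b_2$) $V_{a,b}\ne\emptyset$ and $V_{b,c}\ne\emptyset$. $\mathcal{H}_3$: start with two nonadjacent vertices $a,b$ and add nonempty sets $V_a$ and $V_{a,b}$. $\mathcal{H}_4$: start with a vertex $a$ and an edge $bc$ ($a$ adjacent to neither) and add sets $V_{a,b}$ and $V_{a,b,c}$ such that ($a_4$) $V_{a,b}=\emptyset$ and $|V_{a,b,c}|\ge 2$, or ($b_4$) $V_{a,b}\ne\emptyset$. $\mathcal{H}_5$: start with a path $abc$ and add sets $V_{a,b}$ and $V_{a,b,c}$ such that ($a_5$) $V_{a,b}\ne\emptyset$ and $V_{a,b,c}\ne\emptyset$, or ($b_5$) $V_{a,b}=\emptyset$ and $|V_{a,b,c}|\ge2$. $\mathcal{H}_6$: start with a path $abc$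 and add sets $V_{a,c}$ and $V_{a,b,c}$ such that ($a_6$) $V_{a,c}\ne\emptyset$ and $V_{a,b,c}\ne\emptyset$, or ($b_6$) $V_{a,c}=\emptyset$ and $|V_{a,b,c}|\ge 2$. *)

theory Defs
  imports Main
begin

definition simple_graph :: "'a set \<Rightarrow> ('a \<Rightarrow> 'a \<Rightarrow> bool) \<Rightarrow> bool" where
  "simple_graph V E \<longleftrightarrow> finite V \<and> (\<forall>x y. E x y \<longrightarrow> x \<in> V \<and> y \<in> V)
     \<and> (\<forall>x y. E x y \<longrightarrow> E y x) \<and> (\<forall>x. \<not> E x x)"

definition connected_graph :: "'a set \<Rightarrow> ('a \<Rightarrow> 'a \<Rightarrow> bool) \<Rightarrow> bool" where
  "connected_graph V E \<longleftrightarrow> (\<forall>u\<in>V. \<forall>v\<in>V. (u, v) \<in> {(x, y). E x y}\<^sup>*)"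

definition nbr :: "'a set \<Rightarrow> ('a \<Rightarrow> 'a \<Rightarrow> bool) \<Rightarrow> 'a \<Rightarrow> 'a set" where
  "nbr V E v = {u \<in> V. E v u}"

definition drd :: "'a set \<Rightarrow> ('a \<Rightarrow> 'a \<Rightarrow> bool) \<Rightarrow> ('a \<Rightarrow> nat) \<Rightarrow> bool" where
  "drd V E f \<longleftrightarrow> (\<forall>v\<in>V. f v \<le> 3)
     \<and> (\<forall>v\<in>V. f v = 0 \<longrightarrow> (\<exists>u\<in>V. E v u \<and> f u = 3)
            \<or> (\<exists>u\<in>V. \<exists>w\<in>V. u \<noteq> w \<and> E v u \<and> E v w \<and> f u = 2 \<and> f w = 2))
     \<and> (\<forall>v\<in>V. f v = 1 \<longrightarrow> (\<exists>u\<in>V. E v u \<and> f u \<ge> 2))"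

definition oidrd :: "'a set \<Rightarrow> ('a \<Rightarrow> 'a \<Rightarrow> bool) \<Rightarrow> ('a \<Rightarrow> nat) \<Rightarrow> bool" where
  "oidrd V E f \<longleftrightarrow> drd V E f \<and> (\<forall>u\<in>V. \<forall>v\<in>V. f u = 0 \<and> f v = 0 \<longrightarrow> \<not> E u v)"

definition gamma_oidR :: "'a set \<Rightarrow> ('a \<Rightarrow> 'a \<Rightarrow> bool) \<Rightarrow> nat" where
  "gamma_oidR V E = Min {sum f V | f. oidrd V E f}"

definition is_star :: "'a set \<Rightarrow> ('a \<Rightarrow> 'a \<Rightarrow> bool) \<Rightarrow> bool" where
  "is_star V E \<longleftrightarrow> (\<exists>c\<in>V. \<forall>v\<in>V - {c}. nbr V E v = {c})"

(* S is a set of added vertices (disjoint from the starting vertices B), each with neighbourhood X *)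
definition attached :: "'a set \<Rightarrow> ('a \<Rightarrow> 'a \<Rightarrow> bool) \<Rightarrow> 'a set \<Rightarrow> 'a set \<Rightarrow> 'a set \<Rightarrow> bool" where
  "attached V E B S X \<longleftrightarrow> S \<subseteq> V - B \<and> (\<forall>x\<in>S. nbr V E x = X)"

definition famG :: "'a set \<Rightarrow> ('a \<Rightarrow> 'a \<Rightarrow> bool) \<Rightarrow> bool" where
  "famG V E \<longleftrightarrow> (\<exists>v1 v2 L W. v1 \<in> V \<and> v2 \<in> V \<and> v1 \<noteq> v2 \<and>
      attached V E {v1, v2} L {v1} \<and> attached V E {v1, v2} W {v1, v2} \<and>
      V = {v1, v2} \<union> L \<union> W \<and>
      ((E v1 v2 \<and> L \<noteq> {} \<and> W \<noteq> {})        \<comment> \<open>G_1\<close>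
       \<or> (E v1 v2 \<and> L = {} \<and> W \<noteq> {})        \<comment> \<open>G_2\<close>
       \<or> (\<not> E v1 v2 \<and> L = {} \<and> card W \<ge> 2)))  \<comment> \<open>G_3\<close>"

definition famH1 :: "'a set \<Rightarrow> ('a \<Rightarrow> 'a \<Rightarrow> bool) \<Rightarrow> bool" where
  "famH1 V E \<longleftrightarrow> (\<exists>a b c Vb Vab Vbc Vabc. a \<in> V \<and> b \<in> V \<and> c \<in> V \<and> distinct [a, b, c] \<and>
      E a b \<and> E b c \<and> \<not> E a c \<and>
      attached V E {a, b, c} Vb {b} \<and> attached V E {a, b, c} Vab {a, b} \<and>
      attached V E {a, b, c} Vbc {b, c} \<and> attached V E {a, b, c} Vabc {a, b, c} \<and>
      V = {a, b, c} \<union> Vb \<union> Vab \<union> Vbc \<union> Vabc \<and>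
      ((Vab = {} \<and> Vbc = {} \<and> card Vabc \<ge> 2)
       \<or> ((Vab = {} \<longleftrightarrow> Vbc \<noteq> {}) \<and> Vabc \<noteq> {})
       \<or> (Vab \<noteq> {} \<and> Vbc \<noteq> {})))"

definition famH2 :: "'a set \<Rightarrow> ('a \<Rightarrow> 'a \<Rightarrow> bool) \<Rightarrow> bool" where
  "famH2 V E \<longleftrightarrow> (\<exists>a b c Vb Vab Vbc Vabc. a \<in> V \<and> b \<in> V \<and> c \<in> V \<and> distinct [a, b, c] \<and>
      E a b \<and> E b c \<and> E a c \<and>
      attached V E {a, b, c} Vb {b} \<and> attached V E {a, b, c} Vab {a, b} \<and>
      attached V E {a, b, c} Vbc {b, c} \<and> attached V E {a, b, c} Vabc {a, b, c} \<and>
      V = {a, b, c} \<union> Vb \<union> Vab \<union> Vbc \<union> Vabc \<and>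
      (Vabc \<noteq> {} \<or> (Vab \<noteq> {} \<and> Vbc \<noteq> {})))"

definition famH3 :: "'a set \<Rightarrow> ('a \<Rightarrow> 'a \<Rightarrow> bool) \<Rightarrow> bool" where
  "famH3 V E \<longleftrightarrow> (\<exists>a b Va Vab. a \<in> V \<and> b \<in> V \<and> a \<noteq> b \<and> \<not> E a b \<and>
      attached V E {a, b} Va {a} \<and> attached V E {a, b} Vab {a, b} \<and>
      V = {a, b} \<union> Va \<union> Vab \<and> Va \<noteq> {} \<and> Vab \<noteq> {})"

definition famH4 :: "'a set \<Rightarrow> ('a \<Rightarrow> 'a \<Rightarrow> bool) \<Rightarrow> bool" where
  "famH4 V E \<longleftrightarrow> (\<exists>a b c Vab Vabc. a \<in> V \<and> b \<in> V \<and> c \<in> V \<and> distinct [a, b, c] \<and>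
      E b c \<and> \<not> E a b \<and> \<not> E a c \<and>
      attached V E {a, b, c} Vab {a, b} \<and> attached V E {a, b, c} Vabc {a, b, c} \<and>
      V = {a, b, c} \<union> Vab \<union> Vabc \<and>
      ((Vab = {} \<and> card Vabc \<ge> 2) \<or> Vab \<noteq> {}))"

definition famH5 :: "'a set \<Rightarrow> ('a \<Rightarrow> 'a \<Rightarrow> bool) \<Rightarrow> bool" where
  "famH5 V E \<longleftrightarrow> (\<exists>a b c Vab Vabc. a \<in> V \<and> b \<in> V \<and> c \<in> V \<and> distinct [a, b, c] \<and>
      E a b \<and> E b c \<and> \<not> E a c \<and>
      attached V E {a, b, c} Vab {a, b} \<and> attached V E {a, b, c} Vabc {a, b, c} \<and>
      V = {a, b, c} \<union> Vab \<union> Vabc \<and>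
      ((Vab \<noteq> {} \<and> Vabc \<noteq> {}) \<or> (Vab = {} \<and> card Vabc \<ge> 2)))"

definition famH6 :: "'a set \<Rightarrow> ('a \<Rightarrow> 'a \<Rightarrow> bool) \<Rightarrow> bool" where
  "famH6 V E \<longleftrightarrow> (\<exists>a b c Vac Vabc. a \<in> V \<and> b \<in> V \<and> c \<in> V \<and> distinct [a, b, c] \<and>
      E a b \<and> E b c \<and> \<not> E a c \<and>
      attached V E {a, b, c} Vac {a, c} \<and> attached V E {a, b, c} Vabc {a, b, c} \<and>
      V = {a, b, c} \<union> Vac \<union> Vabc \<and>
      ((Vac \<noteq> {} \<and> Vabc \<noteq> {}) \<or> (Vac = {} \<and> card Vabc \<ge> 2)))"

end

theory Submission
  imports Defs
begin

lemma sum_sub_le: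
  fixes f :: "'a \<Rightarrow> nat"
  assumes "finite V" "S \<subseteq> V" shows "sum f S \<le> sum f V"
  using assms by (intro sum_mono2) auto

lemma sum_ge2:
  fixes f :: "'a \<Rightarrow> nat"
  assumes "finite V" "x \<in> V" "y \<in> V" "x \<noteq> y" shows "f x + f y \<le> sum f V"
  using sum_sub_le[OF assms(1), of "{x,y}" f] assms by simp

lemma sum_ge3:
  fixes f :: "'a \<Rightarrow> nat"
  assumes "finite V" "x \<in> V" "y \<in> V" "z \<in> V" "distinct [x,y,z]" shows "f x + f y + f z \<le> sum f V"
  using sum_sub_le[OF assms(1), of "{x,y,z}" f] assms by simp

lemma sum_ge4:
  fixes f :: "'a \<Rightarrow> nat"
  assumes "finite V" "x \<in> V" "y \<in> V" "z \<in> V" "w \<in> V" "distinct [x,y,z,w]" shows "f x + f y + f z + f w \<le> sum f V"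
  using sum_sub_le[OF assms(1), of "{x,y,z,w}" f] assms by (simp add: add.assoc)

lemma sum_ge5:
  fixes f :: "'a \<Rightarrow> nat"
  assumes "finite V" "x \<in> V" "y \<in> V" "z \<in> V" "w \<in> V" "u \<in> V" "distinct [x,y,z,w,u]" shows "f x + f y + f z + f w + f u \<le> sum f V"
  using sum_sub_le[OF assms(1), of "{x,y,z,w,u}" f] assms by (simp add: add.assoc)

lemma sum_supp:
  fixes f :: "'a \<Rightarrow> nat"
  assumes "finite V" "S \<subseteq> V" "\<forall>v\<in>V-S. f v = 0" shows "sum f V = sum f S"
  using assms by (intro sum.mono_neutral_right) auto

lemma gamma_le:
  assumes "finite V" "oidrd V E f" shows "gamma_oidR V E \<le> sum f V"
proof -
  let ?S = "{sum f V | f. oidrd V E f}"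
  have "?S \<subseteq> {..3 * card V}"
  proof
    fix s assume "s \<in> ?S"
    then obtain g where g: "oidrd V E g" "s = sum g V" by blast
    have "sum g V \<le> sum (\<lambda>_. 3) V"
      using g(1) by (intro sum_mono) (auto simp: oidrd_def drd_def)
    then show "s \<in> {..3 * card V}" using g by simp
  qed
  then have "finite ?S" by (rule finite_subset) simp
  moreover have "sum f V \<in> ?S" using assms by blast
  ultimately show ?thesis unfolding gamma_oidR_def by (rule Min_le)
qed

lemma gamma_attained:
  assumes "finite V" shows "\<exists>f. oidrd V E f \<and> sum f V = gamma_oidR V E"
proof -
  let ?S = "{sum f V | f. oidrd V E f}"
  have "?S \<subseteq> {..3 * card V}"
  proof
    fix s assume "s \<in> ?S"
    then obtain g where g: "oidrd V E g" "s = sum g V" by blast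
    have "sum g V \<le> sum (\<lambda>_. 3) V"
      using g(1) by (intro sum_mono) (auto simp: oidrd_def drd_def)
    then show "s \<in> {..3 * card V}" using g by simp
  qed
  then have "finite ?S" by (rule finite_subset) simp
  moreover have "oidrd V E (\<lambda>_. 3)" by (auto simp: oidrd_def drd_def)
  then have "?S \<noteq> {}" by blast
  ultimately have "Min ?S \<in> ?S" by (rule Min_in)
  then show ?thesis unfolding gamma_oidR_def by auto
qed

lemma nbr_eq_iff:
  assumes "simple_graph V E" "X \<subseteq> V"
  shows "nbr V E v = X \<longleftrightarrow> (\<forall>u. E v u \<longleftrightarrow> u \<in> X)"
  using assms unfolding nbr_def simple_graph_def by blast

lemma no_isolated:
  assumes "connected_graph V E" "u \<in> V" "v \<in> V" "u \<noteq> v"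
  shows "\<exists>w. E u w"
proof -
  have "(u, v) \<in> {(x, y). E x y}\<^sup>*" using assms unfolding connected_graph_def by blast
  then show ?thesis using assms(4) by (cases rule: converse_rtranclE) auto
qed


definition S32 :: "'a set \<Rightarrow> ('a \<Rightarrow> 'a \<Rightarrow> bool) \<Rightarrow> 'a \<Rightarrow> 'a \<Rightarrow> bool" where
  "S32 V E x y \<longleftrightarrow> x \<in> V \<and> y \<in> V \<and> x \<noteq> y \<and> (\<forall>v\<in>V-{x,y}. E v x \<and> (\<forall>u. E v u \<longrightarrow> u = x \<or> u = y))"

definition S22 :: "'a set \<Rightarrow> ('a \<Rightarrow> 'a \<Rightarrow> bool) \<Rightarrow> 'a \<Rightarrow> 'a \<Rightarrow> bool" where
  "S22 V E x y \<longleftrightarrow> x \<in> V \<and> y \<in> V \<and> x \<noteq> y \<and> (\<forall>v\<in>V-{x,y}. E v x \<and> E v y \<and> (\<forall>u. E v u \<longrightarrow> u = x \<or> u = y))"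

definition S311 :: "'a set \<Rightarrow> ('a \<Rightarrow> 'a \<Rightarrow> bool) \<Rightarrow> 'a \<Rightarrow> 'a \<Rightarrow> 'a \<Rightarrow> bool" where
  "S311 V E x y z \<longleftrightarrow> x \<in> V \<and> y \<in> V \<and> z \<in> V \<and> distinct [x,y,z] \<and> E x y \<and> E x z \<and>
     (\<forall>v\<in>V-{x,y,z}. E v x \<and> (\<forall>u. E v u \<longrightarrow> u = x \<or> u = y \<or> u = z))"

definition S221 :: "'a set \<Rightarrow> ('a \<Rightarrow> 'a \<Rightarrow> bool) \<Rightarrow> 'a \<Rightarrow> 'a \<Rightarrow> 'a \<Rightarrow> bool" where
  "S221 V E x y z \<longleftrightarrow> x \<in> V \<and> y \<in> V \<and> z \<in> V \<and> distinct [x,y,z] \<and> (E z x \<or> E z y) \<and>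
     (\<forall>v\<in>V-{x,y,z}. E v x \<and> E v y \<and> (\<forall>u. E v u \<longrightarrow> u = x \<or> u = y \<or> u = z))"

locale oid =
  fixes V :: "'a set" and E :: "'a \<Rightarrow> 'a \<Rightarrow> bool" and f :: "'a \<Rightarrow> nat"
  assumes sg: "simple_graph V E" and f: "oidrd V E f"
begin

lemma fin: "finite V" using sg by (simp add: simple_graph_def)
lemma sym: "E u v \<Longrightarrow> E v u" using sg by (simp add: simple_graph_def)
lemma irr: "\<not> E u u" using sg by (simp add: simple_graph_def)
lemma inV: "E u v \<Longrightarrow> u \<in> V" "E u v \<Longrightarrow> v \<in> V" using sg by (auto simp: simple_graph_def)
lemma le3: "v \<in> V \<Longrightarrow> f v \<le> 3" using f by (simp add: oidrd_def drd_def)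
lemma z0: "v \<in> V \<Longrightarrow> f v = 0 \<Longrightarrow> (\<exists>u\<in>V. E v u \<and> f u = 3)
            \<or> (\<exists>u\<in>V. \<exists>w\<in>V. u \<noteq> w \<and> E v u \<and> E v w \<and> f u = 2 \<and> f w = 2)"
  using f by (simp add: oidrd_def drd_def)
lemma z1: "v \<in> V \<Longrightarrow> f v = 1 \<Longrightarrow> \<exists>u\<in>V. E v u \<and> f u \<ge> 2"
  using f by (simp add: oidrd_def drd_def)
lemma nz: "v \<in> V \<Longrightarrow> f v = 0 \<Longrightarrow> E v u \<Longrightarrow> f u \<noteq> 0"
  using f inV[of v u] unfolding oidrd_def by auto
lemma agen: "v \<in> V \<Longrightarrow> f v = 0 \<Longrightarrow> \<forall>w\<in>V-S. f w = 0 \<Longrightarrow> E v u \<Longrightarrow> u \<in> S"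
proof (rule ccontr)
  assume a: "v \<in> V" "f v = 0" "\<forall>w\<in>V-S. f w = 0" "E v u" "u \<notin> S"
  then have "u \<in> V - S" using inV(2)[of v u] by simp
  then have "f u = 0" using a(3) by simp
  then show False using nz[of v u] a by simp
qed

lemma zero_nbr:
  assumes "v \<in> V" "f v = 0" "\<forall>w\<in>V-S. f w = 0"
  shows "(\<forall>u. E v u \<longrightarrow> u \<in> S) \<and> ((\<exists>u\<in>S. E v u \<and> f u = 3)
            \<or> (\<exists>u\<in>S. \<exists>w\<in>S. u \<noteq> w \<and> E v u \<and> E v w \<and> f u = 2 \<and> f w = 2))"
proof -
  have a: "\<forall>u. E v u \<longrightarrow> u \<in> S" using agen[OF assms] by blast
  show ?thesis using z0[OF assms(1,2)] a by blast
qed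

lemma big_nbr:
  assumes "E w u" "f u \<ge> 2" "\<forall>v\<in>V-S. f v = 0"
  shows "u \<in> S"
proof (rule ccontr)
  assume "u \<notin> S"
  then have "u \<in> V - S" using inV(2)[OF assms(1)] by simp
  then show False using assms by auto
qed

lemma caseA1:
  assumes x: "x \<in> V" "f x = 3" and o: "\<forall>v\<in>V-{x}. f v = 0"
  shows "sum f V = 3 \<and> is_star V E"
proof -
  have "sum f V = sum f {x}" using sum_supp[OF fin _ o] x by simp
  then have s: "sum f V = 3" using x by simp
  have "\<forall>v\<in>V-{x}. nbr V E v = {x}"
  proof
    fix v assume v: "v \<in> V - {x}"
    have "f v = 0" using o v by simp
    from zero_nbr[OF _ this o] v have "(\<forall>u. E v u \<longrightarrow> u \<in> {x}) \<and> E v x" by auto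
    then show "nbr V E v = {x}" using x unfolding nbr_def by auto
  qed
  then show ?thesis unfolding is_star_def using x s by blast
qed

lemma caseA2a:
  assumes x: "x \<in> V" "f x = 3" and y: "y \<in> V" "y \<noteq> x" "f y \<ge> 2" and s: "sum f V \<le> 5"
  shows "S32 V E x y"
proof -
  have fy: "f y = 2" using sum_ge2[OF fin x(1) y(1), of f] y x s by simp
  have o: "\<forall>v\<in>V-{x,y}. f v = 0"
  proof (rule ccontr)
    assume "\<not> ?thesis"
    then obtain z where "z \<in> V" "z \<noteq> x" "z \<noteq> y" "f z \<noteq> 0" by auto
    then show False using sum_ge3[OF fin x(1) y(1), of z f] x y fy s by simp
  qed
  have "\<forall>v\<in>V-{x,y}. E v x \<and> (\<forall>u. E v u \<longrightarrow> u = x \<or> u = y)"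
  proof
    fix v assume v: "v \<in> V - {x,y}"
    have "f v = 0" using o v by simp
    from zero_nbr[OF _ this o] v
    show "E v x \<and> (\<forall>u. E v u \<longrightarrow> u = x \<or> u = y)" using fy x by auto
  qed
  then show ?thesis unfolding S32_def using x y by auto
qed

lemma caseA2b1:
  assumes x: "x \<in> V" "f x = 3" and y: "y \<in> V" "y \<noteq> x" "f y = 1" and o: "\<forall>v\<in>V-{x,y}. f v = 0"
  shows "sum f V = 4 \<and> S32 V E x y \<and> E x y"
proof -
  have "sum f V = sum f {x,y}" using sum_supp[OF fin _ o] x y by simp
  then have s: "sum f V = 4" using x y by simp
  have exy: "E y x"
  proof -
    obtain u where u: "u \<in> V" "E y u" "f u \<ge> 2" using z1[OF y(1) y(3)] by blast
    then have "u \<in> {x,y}" using big_nbr[OF u(2,3) o] by simp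
    then show ?thesis using irr \<open>E y u\<close> by auto
  qed
  have "\<forall>v\<in>V-{x,y}. E v x \<and> (\<forall>u. E v u \<longrightarrow> u = x \<or> u = y)"
  proof
    fix v assume v: "v \<in> V - {x,y}"
    have "f v = 0" using o v by simp
    from zero_nbr[OF _ this o] v
    show "E v x \<and> (\<forall>u. E v u \<longrightarrow> u = x \<or> u = y)" using y x by auto
  qed
  then have "S32 V E x y" unfolding S32_def using x y by auto
  then show ?thesis using s exy sym by blast
qed

lemma caseA2b2:
  assumes x: "x \<in> V" "f x = 3" and y: "y \<in> V" "y \<noteq> x" "f y = 1"
    and z: "z \<in> V" "z \<noteq> x" "z \<noteq> y" "f z \<noteq> 0" and s: "sum f V \<le> 5"
  shows "S311 V E x y z"
proof -
  have fz: "f z = 1" using sum_ge3[OF fin x(1) y(1) z(1), of f] x y z s by simp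
  have o: "\<forall>v\<in>V-{x,y,z}. f v = 0"
  proof (rule ccontr)
    assume "\<not> ?thesis"
    then obtain w where "w \<in> V" "w \<noteq> x" "w \<noteq> y" "w \<noteq> z" "f w \<noteq> 0" by auto
    then show False using sum_ge4[OF fin x(1) y(1) z(1), of w f] x y z fz s by simp
  qed
  have exy: "E y x"
  proof -
    obtain u where u: "u \<in> V" "E y u" "f u \<ge> 2" using z1[OF y(1) y(3)] by blast
    then have "u \<in> {x,y,z}" using big_nbr[OF u(2,3) o] by simp
    then show ?thesis using irr[of y] u fz by auto
  qed
  have exz: "E z x"
  proof -
    obtain u where u: "u \<in> V" "E z u" "f u \<ge> 2" using z1[OF z(1) fz] by blast
    then have "u \<in> {x,y,z}" using big_nbr[OF u(2,3) o] by simp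
    then show ?thesis using irr[of z] u y by auto
  qed
  have "\<forall>v\<in>V-{x,y,z}. E v x \<and> (\<forall>u. E v u \<longrightarrow> u = x \<or> u = y \<or> u = z)"
  proof
    fix v assume v: "v \<in> V - {x,y,z}"
    have "f v = 0" using o v by simp
    from zero_nbr[OF _ this o] v
    show "E v x \<and> (\<forall>u. E v u \<longrightarrow> u = x \<or> u = y \<or> u = z)" using y x fz by auto
  qed
  then show ?thesis unfolding S311_def using x y z exy exz sym by auto
qed

lemma caseB2a:
  assumes x: "x \<in> V" "f x = 2" and y: "y \<in> V" "y \<noteq> x" "f y = 2" and o: "\<forall>v\<in>V-{x,y}. f v = 0"
  shows "sum f V = 4 \<and> S22 V E x y"
proof -
  have "sum f V = sum f {x,y}" using sum_supp[OF fin _ o] x y by simp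
  then have s: "sum f V = 4" using x y by simp
  have "\<forall>v\<in>V-{x,y}. E v x \<and> E v y \<and> (\<forall>u. E v u \<longrightarrow> u = x \<or> u = y)"
  proof
    fix v assume v: "v \<in> V - {x,y}"
    have "f v = 0" using o v by simp
    from zero_nbr[OF _ this o] v
    show "E v x \<and> E v y \<and> (\<forall>u. E v u \<longrightarrow> u = x \<or> u = y)" using y x by auto
  qed
  then have "S22 V E x y" unfolding S22_def using x y by auto
  then show ?thesis using s by blast
qed

lemma caseB2b:
  assumes x: "x \<in> V" "f x = 2" and y: "y \<in> V" "y \<noteq> x" "f y = 2"
    and z: "z \<in> V" "z \<noteq> x" "z \<noteq> y" "f z \<noteq> 0" and s: "sum f V \<le> 5"
    and no3: "\<forall>v\<in>V. f v \<noteq> 3"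
  shows "S221 V E x y z"
proof -
  have fz: "f z = 1" using sum_ge3[OF fin x(1) y(1) z(1), of f] x y z s by simp
  have o: "\<forall>v\<in>V-{x,y,z}. f v = 0"
  proof (rule ccontr)
    assume "\<not> ?thesis"
    then obtain w where "w \<in> V" "w \<noteq> x" "w \<noteq> y" "w \<noteq> z" "f w \<noteq> 0" by auto
    then show False using sum_ge4[OF fin x(1) y(1) z(1), of w f] x y z fz s by simp
  qed
  have ez: "E z x \<or> E z y"
  proof -
    obtain u where u: "u \<in> V" "E z u" "f u \<ge> 2" using z1[OF z(1) fz] by blast
    then have "u \<in> {x,y,z}" using big_nbr[OF u(2,3) o] by simp
    then show ?thesis using irr \<open>E z u\<close> by auto
  qed
  have "\<forall>v\<in>V-{x,y,z}. E v x \<and> E v y \<and> (\<forall>u. E v u \<longrightarrow> u = x \<or> u = y \<or> u = z)"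
  proof
    fix v assume v: "v \<in> V - {x,y,z}"
    have "f v = 0" using o v by simp
    from zero_nbr[OF _ this o] v
    have A: "\<forall>u. E v u \<longrightarrow> u \<in> {x,y,z}" and B: "(\<exists>u\<in>{x,y,z}. E v u \<and> f u = 3)
            \<or> (\<exists>u\<in>{x,y,z}. \<exists>w\<in>{x,y,z}. u \<noteq> w \<and> E v u \<and> E v w \<and> f u = 2 \<and> f w = 2)" by simp_all
    have C: "\<not> (\<exists>u\<in>{x,y,z}. E v u \<and> f u = 3)" using no3 x y z by auto
    obtain u w where uw: "u \<in> {x,y,z}" "w \<in> {x,y,z}" "u \<noteq> w" "E v u" "E v w" "f u = 2" "f w = 2"
      using B C by blast
    have "u \<noteq> z" "w \<noteq> z" using uw fz by auto
    then have "(u = x \<and> w = y) \<or> (u = y \<and> w = x)" using uw by blast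
    then have "E v x \<and> E v y" using uw by blast
    then show "E v x \<and> E v y \<and> (\<forall>u. E v u \<longrightarrow> u = x \<or> u = y \<or> u = z)" using A by simp
  qed
  then show ?thesis unfolding S221_def using x y z ez by auto
qed

lemma caseB1:
  assumes x: "x \<in> V" "f x = 2" and no3: "\<forall>v\<in>V. f v \<noteq> 3" and one2: "\<forall>v\<in>V-{x}. f v \<noteq> 2"
    and card: "card V \<ge> 3"
  shows "sum f V \<ge> 4 \<and> (sum f V \<le> 4 \<longrightarrow> (\<exists>y. S32 V E x y \<and> E x y)) \<and> (sum f V \<le> 5 \<longrightarrow> (\<exists>y z. S311 V E x y z))"
proof -
  have nz0: "f v \<noteq> 0" if v: "v \<in> V" for v
  proof
    assume "f v = 0"
    from z0[OF v this] obtain u w where "u \<in> V" "w \<in> V" "u \<noteq> w" "f u = 2" "f w = 2"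
      using no3 by blast
    then show False using one2 by blast
  qed
  have o1: "f v = 1" if "v \<in> V" "v \<noteq> x" for v
  proof -
    have "f v \<noteq> 0" "f v \<noteq> 2" "f v \<noteq> 3" "f v \<le> 3" using nz0 one2 no3 le3 that by auto
    then show ?thesis by linarith
  qed
  have ex: "E v x" if vv: "v \<in> V" "v \<noteq> x" for v
  proof -
    obtain u where u: "u \<in> V" "E v u" "f u \<ge> 2" using z1[OF vv(1) o1[OF vv]] by blast
    have "u = x"
    proof (rule ccontr)
      assume "u \<noteq> x" then have "f u = 1" using o1 u by blast
      then show False using u by simp
    qed
    then show ?thesis using u by simp
  qed
  obtain y z where yz: "y \<in> V" "z \<in> V" "distinct [x,y,z]"
  proof -
    have "card (V - {x}) \<ge> 2" using card x fin by simp
    then obtain y z where "y \<in> V - {x}" "z \<in> V - {x}" "y \<noteq> z"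
      by (metis One_nat_def Suc_1 card_le_Suc_iff insert_iff numeral_3_eq_3)
    then show ?thesis using that by auto
  qed
  have fy: "f y = 1" and fz: "f z = 1" using o1 yz by auto
  have s4: "sum f V \<ge> 4" using sum_ge3[OF fin x(1) yz(1,2) yz(3), of f] x fy fz by simp
  have exy: "E x y" and exz: "E x z" using ex sym yz by auto
  have P4: "S32 V E x y \<and> E x y" if s: "sum f V \<le> 4"
  proof -
    have V3: "\<forall>w\<in>V. w = x \<or> w = y \<or> w = z"
    proof (rule ccontr)
      assume "\<not> ?thesis"
      then obtain w where w: "w \<in> V" "w \<noteq> x" "w \<noteq> y" "w \<noteq> z" by auto
      then have "f w = 1" using o1 by blast
      then show False using sum_ge4[OF fin x(1) yz(1,2) w(1), of f] x fy fz yz w s by simp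
    qed
    have "\<forall>v\<in>V-{x,y}. E v x \<and> (\<forall>u. E v u \<longrightarrow> u = x \<or> u = y)"
    proof
      fix v assume v: "v \<in> V - {x,y}"
      then have vz: "v = z" using V3 by blast
      have "E v x" using ex v by blast
      moreover have "E v u \<Longrightarrow> u = x \<or> u = y" for u
        using V3 inV(2)[of v u] irr[of v] vz by blast
      ultimately show "E v x \<and> (\<forall>u. E v u \<longrightarrow> u = x \<or> u = y)" by blast
    qed
    then show ?thesis unfolding S32_def using x yz exy by auto
  qed
  have P5: "S311 V E x y z" if s: "sum f V \<le> 5"
  proof -
    have "\<forall>v\<in>V-{x,y,z}. E v x \<and> (\<forall>u. E v u \<longrightarrow> u = x \<or> u = y \<or> u = z)"
    proof
      fix v assume v: "v \<in> V - {x,y,z}"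
      have "E v x" using ex v by blast
      moreover have "u = x \<or> u = y \<or> u = z" if e: "E v u" for u
      proof (rule ccontr)
        assume nu: "\<not> ?thesis"
        have uV: "u \<in> V" "u \<noteq> v" using inV(2)[OF e] irr[of v] e by auto
        have "f v = 1" "f u = 1" using o1 v uV nu by auto
        moreover have "distinct [x,y,z,v,u]" using yz v uV nu by auto
        ultimately show False using sum_ge5[OF fin x(1) yz(1,2), of v u f] x fy fz v uV s by simp
      qed
      ultimately show "E v x \<and> (\<forall>u. E v u \<longrightarrow> u = x \<or> u = y \<or> u = z)" by blast
    qed
    then show ?thesis unfolding S311_def using x yz exy exz by auto
  qed
  show ?thesis using s4 P4 P5 by blast
qed

lemma struct_main:
  assumes card: "card V \<ge> 3"
  shows "3 \<le> sum f V \<and> (sum f V \<le> 3 \<longrightarrow> is_star V E)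
    \<and> (sum f V \<le> 4 \<longrightarrow> is_star V E \<or> (\<exists>x y. S32 V E x y \<and> E x y) \<or> (\<exists>x y. S22 V E x y))
    \<and> (sum f V \<le> 5 \<longrightarrow> is_star V E \<or> (\<exists>x y. S32 V E x y) \<or> (\<exists>x y. S22 V E x y)
          \<or> (\<exists>x y z. S311 V E x y z) \<or> (\<exists>x y z. S221 V E x y z))"
proof (cases "\<exists>x\<in>V. f x = 3")
  case True
  then obtain x where x: "x \<in> V" "f x = 3" by blast
  show ?thesis
  proof (cases "\<exists>y\<in>V-{x}. f y \<noteq> 0")
    case False
    then have o: "\<forall>v\<in>V-{x}. f v = 0" by blast
    then show ?thesis using caseA1[OF x o] by simp
  next
    case True
    then obtain y where y: "y \<in> V" "y \<noteq> x" "f y \<noteq> 0" by blast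
    show ?thesis
    proof (cases "f y \<ge> 2")
      case True
      have s2: "sum f V \<ge> 5" using sum_ge2[OF fin x(1) y(1), of f] y x True by simp
      then show ?thesis using caseA2a[OF x y(1,2) True] by auto
    next
      case False
      then have fy: "f y = 1" using y by simp
      show ?thesis
      proof (cases "\<exists>z\<in>V-{x,y}. f z \<noteq> 0")
        case False
        then have o: "\<forall>v\<in>V-{x,y}. f v = 0" by blast
        show ?thesis using caseA2b1[OF x y(1,2) fy o] by auto
      next
        case True
        then obtain z where z: "z \<in> V" "z \<noteq> x" "z \<noteq> y" "f z \<noteq> 0" by blast
        have s5: "sum f V \<ge> 5" using sum_ge3[OF fin x(1) y(1) z(1), of f] x y z fy by simp
        then show ?thesis using caseA2b2[OF x y(1,2) fy z] by auto
      qed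
    qed
  qed
next
  case no3: False
  have "\<exists>x\<in>V. f x = 2"
  proof (rule ccontr)
    assume n2: "\<not> ?thesis"
    have "V \<noteq> {}" using card by auto
    then obtain v where v: "v \<in> V" by blast
    have "f v \<noteq> 2" "f v \<noteq> 3" "f v \<le> 3" using v n2 no3 le3 by auto
    then have "f v = 0 \<or> f v = 1" by linarith
    then show False
    proof
      assume "f v = 0" then show False using z0[OF v] no3 n2 by blast
    next
      assume "f v = 1" then obtain u where u: "u \<in> V" "f u \<ge> 2" using z1[OF v] by blast
      have "f u \<noteq> 2" "f u \<noteq> 3" "f u \<le> 3" using u n2 no3 le3 by auto
      then show False using u by linarith
    qed
  qed
  then obtain x where x: "x \<in> V" "f x = 2" by blast
  have no3': "\<forall>v\<in>V. f v \<noteq> 3" using no3 by blast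
  show ?thesis
  proof (cases "\<exists>y\<in>V-{x}. f y = 2")
    case True
    then obtain y where y: "y \<in> V" "y \<noteq> x" "f y = 2" by blast
    show ?thesis
    proof (cases "\<exists>z\<in>V-{x,y}. f z \<noteq> 0")
      case False
      then have o: "\<forall>v\<in>V-{x,y}. f v = 0" by blast
      show ?thesis using caseB2a[OF x y o] by auto
    next
      case True
      then obtain z where z: "z \<in> V" "z \<noteq> x" "z \<noteq> y" "f z \<noteq> 0" by blast
      have s5: "sum f V \<ge> 5" using sum_ge3[OF fin x(1) y(1) z(1), of f] x y z by simp
      then show ?thesis using caseB2b[OF x y z _ no3'] by auto
    qed
  next
    case False
    then have one2: "\<forall>v\<in>V-{x}. f v \<noteq> 2" by blast
    from caseB1[OF x no3' one2 card] show ?thesis by auto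
  qed
qed

end


lemma sgE:
  assumes "simple_graph V E"
  shows "finite V" "\<And>u v. E u v \<Longrightarrow> E v u" "\<And>u. \<not> E u u" "\<And>u v. E u v \<Longrightarrow> u \<in> V" "\<And>u v. E u v \<Longrightarrow> v \<in> V"
  using assms by (auto simp: simple_graph_def)

lemma gamma_le_cons:
  assumes "finite V" "oidrd V E g" "sum g V = k" shows "gamma_oidR V E \<le> k"
  using gamma_le[OF assms(1,2)] assms(3) by simp

lemma cons_star:
  assumes sg: "simple_graph V E" and st: "is_star V E"
  shows "gamma_oidR V E \<le> 3"
proof -
  note g = sgE[OF sg]
  obtain c where c: "c \<in> V" "\<forall>v\<in>V-{c}. nbr V E v = {c}" using st unfolding is_star_def by blast
  have nb: "\<And>v u. v \<in> V - {c} \<Longrightarrow> E v u \<longleftrightarrow> u = c" using c(2) nbr_eq_iff[OF sg] c(1) by blast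
  define h where "h = (\<lambda>v. if v = c then 3 else (0::nat))"
  have "oidrd V E h" unfolding oidrd_def drd_def h_def
    using nb c(1) by auto
  moreover have "sum h V = sum h {c}" using sum_supp[OF g(1), of "{c}" h] c(1) unfolding h_def by auto
  then have "sum h V = 3" unfolding h_def by simp
  ultimately show ?thesis using gamma_le_cons[OF g(1)] by blast
qed

lemma cons_SG:
  assumes sg: "simple_graph V E" and s: "S32 V E x y" and e: "E x y"
  shows "gamma_oidR V E \<le> 4"
proof -
  note g = sgE[OF sg]
  have x: "x \<in> V" "y \<in> V" "x \<noteq> y" and o: "\<forall>v\<in>V-{x,y}. E v x \<and> (\<forall>u. E v u \<longrightarrow> u = x \<or> u = y)"
    using s unfolding S32_def by auto
  define h where "h = (\<lambda>v. if v = x then 3 else if v = y then 1 else (0::nat))"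
  have "drd V E h" unfolding drd_def
  proof (intro conjI ballI impI)
    fix v assume "v \<in> V" "h v = 0"
    then have "v \<in> V - {x,y}" unfolding h_def by (auto split: if_splits)
    then show "(\<exists>u\<in>V. E v u \<and> h u = 3) \<or> (\<exists>u\<in>V. \<exists>w\<in>V. u \<noteq> w \<and> E v u \<and> E v w \<and> h u = 2 \<and> h w = 2)"
      using o x unfolding h_def by auto
  next
    fix v assume "v \<in> V" "h v = 1"
    then have "v = y" unfolding h_def by (auto split: if_splits)
    then show "\<exists>u\<in>V. E v u \<and> h u \<ge> 2" using x e g(2) unfolding h_def by auto
  qed (auto simp: h_def)
  moreover have "\<forall>u\<in>V. \<forall>v\<in>V. h u = 0 \<and> h v = 0 \<longrightarrow> \<not> E u v"
  proof (intro ballI impI)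
    fix u v assume "u \<in> V" "v \<in> V" "h u = 0 \<and> h v = 0"
    then have "u \<in> V - {x,y}" "v \<notin> {x,y}" unfolding h_def by (auto split: if_splits)
    then show "\<not> E u v" using o by blast
  qed
  ultimately have "oidrd V E h" unfolding oidrd_def by blast
  moreover have "sum h V = sum h {x,y}" using sum_supp[OF g(1), of "{x,y}" h] x unfolding h_def by auto
  then have "sum h V = 4" unfolding h_def using x by simp
  ultimately show ?thesis using gamma_le_cons[OF g(1)] by blast
qed

lemma cons_S32:
  assumes sg: "simple_graph V E" and s: "S32 V E x y"
  shows "gamma_oidR V E \<le> 5"
proof -
  note g = sgE[OF sg]
  have x: "x \<in> V" "y \<in> V" "x \<noteq> y" and o: "\<forall>v\<in>V-{x,y}. E v x \<and> (\<forall>u. E v u \<longrightarrow> u = x \<or> u = y)"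
    using s unfolding S32_def by auto
  define h where "h = (\<lambda>v. if v = x then 3 else if v = y then 2 else (0::nat))"
  have "drd V E h" unfolding drd_def
  proof (intro conjI ballI impI)
    fix v assume "v \<in> V" "h v = 0"
    then have "v \<in> V - {x,y}" unfolding h_def by (auto split: if_splits)
    then show "(\<exists>u\<in>V. E v u \<and> h u = 3) \<or> (\<exists>u\<in>V. \<exists>w\<in>V. u \<noteq> w \<and> E v u \<and> E v w \<and> h u = 2 \<and> h w = 2)"
      using o x unfolding h_def by auto
  next
    fix v assume "v \<in> V" "h v = 1"
    then show "\<exists>u\<in>V. E v u \<and> h u \<ge> 2" unfolding h_def by (auto split: if_splits)
  qed (auto simp: h_def)
  moreover have "\<forall>u\<in>V. \<forall>v\<in>V. h u = 0 \<and> h v = 0 \<longrightarrow> \<not> E u v"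
  proof (intro ballI impI)
    fix u v assume "u \<in> V" "v \<in> V" "h u = 0 \<and> h v = 0"
    then have "u \<in> V - {x,y}" "v \<notin> {x,y}" unfolding h_def by (auto split: if_splits)
    then show "\<not> E u v" using o by blast
  qed
  ultimately have "oidrd V E h" unfolding oidrd_def by blast
  moreover have "sum h V = sum h {x,y}" using sum_supp[OF g(1), of "{x,y}" h] x unfolding h_def by auto
  then have "sum h V = 5" unfolding h_def using x by simp
  ultimately show ?thesis using gamma_le_cons[OF g(1)] by blast
qed

lemma cons_S22:
  assumes sg: "simple_graph V E" and s: "S22 V E x y"
  shows "gamma_oidR V E \<le> 4"
proof -
  note g = sgE[OF sg]
  have x: "x \<in> V" "y \<in> V" "x \<noteq> y" and o: "\<forall>v\<in>V-{x,y}. E v x \<and> E v y \<and> (\<forall>u. E v u \<longrightarrow> u = x \<or> u = y)"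
    using s unfolding S22_def by auto
  define h where "h = (\<lambda>v. if v = x then 2 else if v = y then 2 else (0::nat))"
  have "drd V E h" unfolding drd_def
  proof (intro conjI ballI impI)
    fix v assume "v \<in> V" "h v = 0"
    then have "v \<in> V - {x,y}" unfolding h_def by (auto split: if_splits)
    then have "E v x" "E v y" using o by auto
    then show "(\<exists>u\<in>V. E v u \<and> h u = 3) \<or> (\<exists>u\<in>V. \<exists>w\<in>V. u \<noteq> w \<and> E v u \<and> E v w \<and> h u = 2 \<and> h w = 2)"
      using x unfolding h_def by auto
  next
    fix v assume "v \<in> V" "h v = 1"
    then show "\<exists>u\<in>V. E v u \<and> h u \<ge> 2" unfolding h_def by (auto split: if_splits)
  qed (auto simp: h_def)
  moreover have "\<forall>u\<in>V. \<forall>v\<in>V. h u = 0 \<and> h v = 0 \<longrightarrow> \<not> E u v"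
  proof (intro ballI impI)
    fix u v assume "u \<in> V" "v \<in> V" "h u = 0 \<and> h v = 0"
    then have "u \<in> V - {x,y}" "v \<notin> {x,y}" unfolding h_def by (auto split: if_splits)
    then show "\<not> E u v" using o by blast
  qed
  ultimately have "oidrd V E h" unfolding oidrd_def by blast
  moreover have "sum h V = sum h {x,y}" using sum_supp[OF g(1), of "{x,y}" h] x unfolding h_def by auto
  then have "sum h V = 4" unfolding h_def using x by simp
  ultimately show ?thesis using gamma_le_cons[OF g(1)] by blast
qed

lemma cons_S311:
  assumes sg: "simple_graph V E" and s: "S311 V E x y z"
  shows "gamma_oidR V E \<le> 5"
proof -
  note g = sgE[OF sg]
  have x: "x \<in> V" "y \<in> V" "z \<in> V" "x \<noteq> y" "x \<noteq> z" "y \<noteq> z" "E x y" "E x z"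
    and o: "\<forall>v\<in>V-{x,y,z}. E v x \<and> (\<forall>u. E v u \<longrightarrow> u = x \<or> u = y \<or> u = z)"
    using s unfolding S311_def by auto
  define h where "h = (\<lambda>v. if v = x then 3 else if v = y then 1 else if v = z then 1 else (0::nat))"
  have "drd V E h" unfolding drd_def
  proof (intro conjI ballI impI)
    fix v assume "v \<in> V" "h v = 0"
    then have "v \<in> V - {x,y,z}" unfolding h_def by (auto split: if_splits)
    then show "(\<exists>u\<in>V. E v u \<and> h u = 3) \<or> (\<exists>u\<in>V. \<exists>w\<in>V. u \<noteq> w \<and> E v u \<and> E v w \<and> h u = 2 \<and> h w = 2)"
      using o x unfolding h_def by auto
  next
    fix v assume "v \<in> V" "h v = 1"
    then have "v = y \<or> v = z" unfolding h_def by (auto split: if_splits)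
    then have "E v x" using x g(2) by auto
    then show "\<exists>u\<in>V. E v u \<and> h u \<ge> 2" using x unfolding h_def by auto
  qed (auto simp: h_def)
  moreover have "\<forall>u\<in>V. \<forall>v\<in>V. h u = 0 \<and> h v = 0 \<longrightarrow> \<not> E u v"
  proof (intro ballI impI)
    fix u v assume "u \<in> V" "v \<in> V" "h u = 0 \<and> h v = 0"
    then have "u \<in> V - {x,y,z}" "v \<notin> {x,y,z}" unfolding h_def by (auto split: if_splits)
    then show "\<not> E u v" using o by blast
  qed
  ultimately have "oidrd V E h" unfolding oidrd_def by blast
  moreover have "sum h V = sum h {x,y,z}" using sum_supp[OF g(1), of "{x,y,z}" h] x unfolding h_def by auto
  then have "sum h V = 5" unfolding h_def using x by simp
  ultimately show ?thesis using gamma_le_cons[OF g(1)] by blast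
qed

lemma cons_S221:
  assumes sg: "simple_graph V E" and s: "S221 V E x y z"
  shows "gamma_oidR V E \<le> 5"
proof -
  note g = sgE[OF sg]
  have x: "x \<in> V" "y \<in> V" "z \<in> V" "x \<noteq> y" "x \<noteq> z" "y \<noteq> z" "E z x \<or> E z y"
    and o: "\<forall>v\<in>V-{x,y,z}. E v x \<and> E v y \<and> (\<forall>u. E v u \<longrightarrow> u = x \<or> u = y \<or> u = z)"
    using s unfolding S221_def by auto
  define h where "h = (\<lambda>v. if v = x then 2 else if v = y then 2 else if v = z then 1 else (0::nat))"
  have "drd V E h" unfolding drd_def
  proof (intro conjI ballI impI)
    fix v assume "v \<in> V" "h v = 0"
    then have "v \<in> V - {x,y,z}" unfolding h_def by (auto split: if_splits)
    then have "E v x" "E v y" using o by auto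
    then show "(\<exists>u\<in>V. E v u \<and> h u = 3) \<or> (\<exists>u\<in>V. \<exists>w\<in>V. u \<noteq> w \<and> E v u \<and> E v w \<and> h u = 2 \<and> h w = 2)"
      using x unfolding h_def by auto
  next
    fix v assume "v \<in> V" "h v = 1"
    then have "v = z" unfolding h_def by (auto split: if_splits)
    then show "\<exists>u\<in>V. E v u \<and> h u \<ge> 2" using x unfolding h_def by auto
  qed (auto simp: h_def)
  moreover have "\<forall>u\<in>V. \<forall>v\<in>V. h u = 0 \<and> h v = 0 \<longrightarrow> \<not> E u v"
  proof (intro ballI impI)
    fix u v assume "u \<in> V" "v \<in> V" "h u = 0 \<and> h v = 0"
    then have "u \<in> V - {x,y,z}" "v \<notin> {x,y,z}" unfolding h_def by (auto split: if_splits)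
    then show "\<not> E u v" using o by blast
  qed
  ultimately have "oidrd V E h" unfolding oidrd_def by blast
  moreover have "sum h V = sum h {x,y,z}" using sum_supp[OF g(1), of "{x,y,z}" h] x unfolding h_def by auto
  then have "sum h V = 5" unfolding h_def using x by simp
  ultimately show ?thesis using gamma_le_cons[OF g(1)] by blast
qed


lemma attE:
  assumes sg: "simple_graph V E" and a: "attached V E B S X" and X: "X \<subseteq> V" and v: "v \<in> S"
  shows "E v u \<longleftrightarrow> u \<in> X"
  using a v nbr_eq_iff[OF sg X] unfolding attached_def by blast

lemma famG_struct:
  assumes sg: "simple_graph V E" and G: "famG V E"
  shows "(\<exists>x y. S32 V E x y \<and> E x y) \<or> (\<exists>x y. S22 V E x y)"
proof -
  obtain v1 v2 L W where b: "v1 \<in> V" "v2 \<in> V" "v1 \<noteq> v2"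
    and aL: "attached V E {v1, v2} L {v1}" and aW: "attached V E {v1, v2} W {v1, v2}"
    and V: "V = {v1, v2} \<union> L \<union> W"
    and c: "(E v1 v2 \<and> L \<noteq> {} \<and> W \<noteq> {}) \<or> (E v1 v2 \<and> L = {} \<and> W \<noteq> {}) \<or> (\<not> E v1 v2 \<and> L = {} \<and> card W \<ge> 2)"
    using G unfolding famG_def by blast
  have eL: "\<And>v u. v \<in> L \<Longrightarrow> E v u \<longleftrightarrow> u = v1" using attE[OF sg aL] b by auto
  have eW: "\<And>v u. v \<in> W \<Longrightarrow> E v u \<longleftrightarrow> u = v1 \<or> u = v2" using attE[OF sg aW] b by auto
  have vs: "\<And>v. v \<in> V - {v1,v2} \<Longrightarrow> v \<in> L \<or> v \<in> W" using V by blast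
  have s32: "S32 V E v1 v2" unfolding S32_def using b vs eL eW by blast
  show ?thesis
  proof (cases "E v1 v2")
    case True then show ?thesis using s32 by blast
  next
    case False
    then have "L = {}" using c by blast
    then have "S22 V E v1 v2" unfolding S22_def using b vs eW by blast
    then show ?thesis by blast
  qed
qed

lemma famH12_struct:
  assumes sg: "simple_graph V E" and H: "famH1 V E \<or> famH2 V E"
  shows "\<exists>x y z. S311 V E x y z"
proof -
  obtain a b c Vb Vab Vbc Vabc where b: "a \<in> V" "b \<in> V" "c \<in> V" "distinct [a, b, c]" "E a b" "E b c"
    and a1: "attached V E {a, b, c} Vb {b}" and a2: "attached V E {a, b, c} Vab {a, b}"
    and a3: "attached V E {a, b, c} Vbc {b, c}" and a4: "attached V E {a, b, c} Vabc {a, b, c}"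
    and V: "V = {a, b, c} \<union> Vb \<union> Vab \<union> Vbc \<union> Vabc"
    using H unfolding famH1_def famH2_def by blast
  have e1: "\<And>v u. v \<in> Vb \<Longrightarrow> E v u \<longleftrightarrow> u = b" using attE[OF sg a1] b by auto
  have e2: "\<And>v u. v \<in> Vab \<Longrightarrow> E v u \<longleftrightarrow> u = a \<or> u = b" using attE[OF sg a2] b by auto
  have e3: "\<And>v u. v \<in> Vbc \<Longrightarrow> E v u \<longleftrightarrow> u = b \<or> u = c" using attE[OF sg a3] b by auto
  have e4: "\<And>v u. v \<in> Vabc \<Longrightarrow> E v u \<longleftrightarrow> u = a \<or> u = b \<or> u = c" using attE[OF sg a4] b by auto
  have vs: "\<And>v. v \<in> V - {b,a,c} \<Longrightarrow> v \<in> Vb \<or> v \<in> Vab \<or> v \<in> Vbc \<or> v \<in> Vabc" using V by blast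
  have "\<forall>v\<in>V-{b,a,c}. E v b \<and> (\<forall>u. E v u \<longrightarrow> u = b \<or> u = a \<or> u = c)"
  proof
    fix v assume "v \<in> V - {b,a,c}"
    then consider "v \<in> Vb" | "v \<in> Vab" | "v \<in> Vbc" | "v \<in> Vabc" using vs by blast
    then show "E v b \<and> (\<forall>u. E v u \<longrightarrow> u = b \<or> u = a \<or> u = c)"
      by cases (auto simp: e1 e2 e3 e4)
  qed
  moreover have "E b a" using b(5) sgE(2)[OF sg] by blast
  ultimately have "S311 V E b a c" unfolding S311_def using b by auto
  then show ?thesis by blast
qed

lemma famH3_struct:
  assumes sg: "simple_graph V E" and H: "famH3 V E"
  shows "\<exists>x y. S32 V E x y"
proof -
  obtain a b Va Vab where b: "a \<in> V" "b \<in> V" "a \<noteq> b"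
    and a1: "attached V E {a, b} Va {a}" and a2: "attached V E {a, b} Vab {a, b}"
    and V: "V = {a, b} \<union> Va \<union> Vab"
    using H unfolding famH3_def by blast
  have e1: "\<And>v u. v \<in> Va \<Longrightarrow> E v u \<longleftrightarrow> u = a" using attE[OF sg a1] b by auto
  have e2: "\<And>v u. v \<in> Vab \<Longrightarrow> E v u \<longleftrightarrow> u = a \<or> u = b" using attE[OF sg a2] b by auto
  have vs: "\<And>v. v \<in> V - {a,b} \<Longrightarrow> v \<in> Va \<or> v \<in> Vab" using V by blast
  have "S32 V E a b" unfolding S32_def using b vs e1 e2 by blast
  then show ?thesis by blast
qed

lemma famH456_struct:
  assumes sg: "simple_graph V E" and H: "famH4 V E \<or> famH5 V E \<or> famH6 V E"
  shows "\<exists>x y z. S221 V E x y z"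
proof -
  have sym: "\<And>u v. E u v \<Longrightarrow> E v u" using sgE[OF sg] by blast
  have "\<exists>x y z S T. x \<in> V \<and> y \<in> V \<and> z \<in> V \<and> distinct [x,y,z] \<and> (E z x \<or> E z y) \<and>
      attached V E {x,y,z} S {x,y} \<and> attached V E {x,y,z} T {x,y,z} \<and> V = {x,y,z} \<union> S \<union> T"
  proof -
    consider "famH4 V E" | "famH5 V E" | "famH6 V E" using H by blast
    then show ?thesis
    proof cases
      case 1
      then obtain a b c Vab Vabc where b: "a \<in> V" "b \<in> V" "c \<in> V" "distinct [a, b, c]" "E b c"
        "attached V E {a, b, c} Vab {a, b}" "attached V E {a, b, c} Vabc {a, b, c}" "V = {a, b, c} \<union> Vab \<union> Vabc"
        unfolding famH4_def by blast
      then show ?thesis using sym by blast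
    next
      case 2
      then obtain a b c Vab Vabc where b: "a \<in> V" "b \<in> V" "c \<in> V" "distinct [a, b, c]" "E b c"
        "attached V E {a, b, c} Vab {a, b}" "attached V E {a, b, c} Vabc {a, b, c}" "V = {a, b, c} \<union> Vab \<union> Vabc"
        unfolding famH5_def by blast
      then show ?thesis using sym by blast
    next
      case 3
      then obtain a b c Vac Vabc where b: "a \<in> V" "b \<in> V" "c \<in> V" "distinct [a, b, c]" "E a b"
        "attached V E {a, b, c} Vac {a, c}" "attached V E {a, b, c} Vabc {a, b, c}" "V = {a, b, c} \<union> Vac \<union> Vabc"
        unfolding famH6_def by blast
      moreover have "{a,b,c} = {a,c,b}" by blast
      ultimately have "a \<in> V \<and> c \<in> V \<and> b \<in> V \<and> distinct [a,c,b] \<and> (E b a \<or> E b c) \<and>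
        attached V E {a,c,b} Vac {a,c} \<and> attached V E {a,c,b} Vabc {a,c,b} \<and> V = {a,c,b} \<union> Vac \<union> Vabc"
        using sym by auto
      then show ?thesis by blast
    qed
  qed
  then obtain x y z S T where b: "x \<in> V" "y \<in> V" "z \<in> V" "distinct [x,y,z]" "E z x \<or> E z y"
    and a1: "attached V E {x,y,z} S {x,y}" and a2: "attached V E {x,y,z} T {x,y,z}" and V: "V = {x,y,z} \<union> S \<union> T"
    by blast
  have e1: "\<And>v u. v \<in> S \<Longrightarrow> E v u \<longleftrightarrow> u = x \<or> u = y" using attE[OF sg a1] b by auto
  have e2: "\<And>v u. v \<in> T \<Longrightarrow> E v u \<longleftrightarrow> u = x \<or> u = y \<or> u = z" using attE[OF sg a2] b by auto
  have vs: "\<And>v. v \<in> V - {x,y,z} \<Longrightarrow> v \<in> S \<or> v \<in> T" using V by blast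
  have "S221 V E x y z" unfolding S221_def using b vs e1 e2 by blast
  then show ?thesis by blast
qed


lemma attI:
  assumes sg: "simple_graph V E" and "S \<subseteq> V - B" "X \<subseteq> V" "\<forall>v\<in>S. \<forall>u. E v u \<longleftrightarrow> u \<in> X"
  shows "attached V E B S X"
  unfolding attached_def using assms nbr_eq_iff[OF sg assms(3)] by blast

lemma famG_I:
  assumes "v1 \<in> V" "v2 \<in> V" "v1 \<noteq> v2" "attached V E {v1, v2} L {v1}" "attached V E {v1, v2} W {v1, v2}"
    "V = {v1, v2} \<union> L \<union> W"
    "(E v1 v2 \<and> L \<noteq> {} \<and> W \<noteq> {}) \<or> (E v1 v2 \<and> L = {} \<and> W \<noteq> {}) \<or> (\<not> E v1 v2 \<and> L = {} \<and> card W \<ge> 2)"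
  shows "famG V E"
  unfolding famG_def by (rule exI[of _ v1], rule exI[of _ v2], rule exI[of _ L], rule exI[of _ W]) (use assms in blast)

lemma famH3_I:
  assumes "a \<in> V" "b \<in> V" "a \<noteq> b" "\<not> E a b"
      "attached V E {a, b} Va {a}" "attached V E {a, b} Vab {a, b}"
      "V = {a, b} \<union> Va \<union> Vab" "Va \<noteq> {}" "Vab \<noteq> {}"
  shows "famH3 V E"
  unfolding famH3_def by (rule exI[of _ a], rule exI[of _ b], rule exI[of _ Va], rule exI[of _ Vab]) (use assms in blast)

lemma S22_S32: "S22 V E x y \<Longrightarrow> S32 V E x y"
  unfolding S22_def S32_def by blast

lemma SG_fam:
  assumes sg: "simple_graph V E" and s: "S32 V E x y" and e: "E x y"
  shows "is_star V E \<or> famG V E"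
proof -
  note g = sgE[OF sg]
  have x: "x \<in> V" "y \<in> V" "x \<noteq> y" and o: "\<forall>v\<in>V-{x,y}. E v x \<and> (\<forall>u. E v u \<longrightarrow> u = x \<or> u = y)"
    using s unfolding S32_def by auto
  define L where "L = {v\<in>V-{x,y}. \<not> E v y}"
  define W where "W = {v\<in>V-{x,y}. E v y}"
  have eL: "\<forall>v\<in>L. \<forall>u. E v u \<longleftrightarrow> u \<in> {x}" using o unfolding L_def by auto
  have eW: "\<forall>v\<in>W. \<forall>u. E v u \<longleftrightarrow> u \<in> {x,y}" using o unfolding W_def by auto
  show ?thesis
  proof (cases "W = {}")
    case True
    have "\<forall>v\<in>V-{x}. nbr V E v = {x}"
    proof
      fix v assume v: "v \<in> V - {x}"
      have "\<forall>u. E v u \<longleftrightarrow> u \<in> {x}"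
      proof (cases "v = y")
        case True
        show ?thesis
        proof (intro allI iffI)
          fix u assume evu: "E v u"
          then have "u \<in> V" "u \<noteq> y" "E u y" using g(5)[OF evu] g(3)[of y] g(2)[OF evu] True by auto
          then have "u \<notin> W \<Longrightarrow> u = x" unfolding W_def by blast
          then show "u \<in> {x}" using \<open>W = {}\<close> by simp
        next
          fix u assume "u \<in> {x}" then show "E v u" using g(2)[OF e] True by auto
        qed
      next
        case False
        then have "v \<in> V - {x,y}" using v by simp
        then have "v \<in> L" using \<open>W = {}\<close> unfolding L_def W_def by blast
        then show ?thesis using eL by blast
      qed
      moreover have "{x} \<subseteq> V" using x by simp
      ultimately show "nbr V E v = {x}" using nbr_eq_iff[OF sg, of "{x}" v] by simp
    qed
    then show ?thesis unfolding is_star_def using x by blast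
  next
    case False
    have aL: "attached V E {x,y} L {x}" by (rule attI[OF sg]) (use eL x in \<open>auto simp: L_def\<close>)
    have aW: "attached V E {x,y} W {x,y}" by (rule attI[OF sg]) (use eW x in \<open>auto simp: W_def\<close>)
    have V: "V = {x,y} \<union> L \<union> W" using x unfolding L_def W_def by auto
    have "famG V E" by (rule famG_I[OF x aL aW V]) (use e False in blast)
    then show ?thesis by blast
  qed
qed

lemma S22_fam:
  assumes sg: "simple_graph V E" and s: "S22 V E x y" and card: "card V \<ge> 3"
  shows "is_star V E \<or> famG V E"
proof (cases "E x y")
  case True
  then show ?thesis using SG_fam[OF sg S22_S32[OF s]] by blast
next
  case False
  note g = sgE[OF sg]
  have x: "x \<in> V" "y \<in> V" "x \<noteq> y" and o: "\<forall>v\<in>V-{x,y}. E v x \<and> E v y \<and> (\<forall>u. E v u \<longrightarrow> u = x \<or> u = y)"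
    using s unfolding S22_def by auto
  show ?thesis
  proof (cases "\<exists>w1\<in>V-{x,y}. \<exists>w2\<in>V-{x,y}. w1 \<noteq> w2")
    case True
    then obtain w1 w2 where w: "w1 \<in> V-{x,y}" "w2 \<in> V-{x,y}" "w1 \<noteq> w2" by blast
    have "card {w1,w2} \<le> card (V-{x,y})" using w g(1) by (intro card_mono) auto
    then have c2: "card (V-{x,y}) \<ge> 2" using w by simp
    have aL: "attached V E {x,y} {} {x}" unfolding attached_def by blast
    have aW: "attached V E {x,y} (V-{x,y}) {x,y}" by (rule attI[OF sg]) (use o x in auto)
    have V: "V = {x,y} \<union> {} \<union> (V-{x,y})" using x by auto
    have "famG V E" by (rule famG_I[OF x aL aW V]) (use c2 False in blast)
    then show ?thesis by blast
  next
    case nf: False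
    have "V - {x,y} \<noteq> {}"
    proof
      assume "V - {x,y} = {}"
      then have "V \<subseteq> {x,y}" by blast
      then have "card V \<le> card {x,y}" by (intro card_mono) auto
      then show False using card x by (simp add: card_insert_if)
    qed
    then obtain w where w: "w \<in> V - {x,y}" by blast
    have Vw: "\<And>v. v \<in> V - {x,y} \<Longrightarrow> v = w" using nf w by blast
    have "\<forall>v\<in>V-{w,x}. E v w \<and> (\<forall>u. E v u \<longrightarrow> u = w \<or> u = x)"
    proof
      fix v assume v: "v \<in> V - {w,x}"
      then have vy: "v = y" using Vw by blast
      have "E y w" using o w g(2) by blast
      moreover have "E y u \<Longrightarrow> u = w \<or> u = x" for u
      proof -
        assume eyu: "E y u"
        then have "u \<in> V" "u \<noteq> y" "u \<noteq> x" using g(5)[OF eyu] g(3)[of y] g(2)[OF eyu] False by auto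
        then show ?thesis using Vw by blast
      qed
      ultimately show "E v w \<and> (\<forall>u. E v u \<longrightarrow> u = w \<or> u = x)" using vy by blast
    qed
    then have "S32 V E w x" unfolding S32_def using w x by auto
    moreover have "E w x" using o w by blast
    ultimately show ?thesis using SG_fam[OF sg] by blast
  qed
qed

lemma S32_fam:
  assumes sg: "simple_graph V E" and s: "S32 V E x y" and card: "card V \<ge> 3" and con: "connected_graph V E"
  shows "is_star V E \<or> famG V E \<or> famH3 V E"
proof (cases "E x y")
  case True
  then show ?thesis using SG_fam[OF sg s] by blast
next
  case False
  note g = sgE[OF sg]
  have x: "x \<in> V" "y \<in> V" "x \<noteq> y" and o: "\<forall>v\<in>V-{x,y}. E v x \<and> (\<forall>u. E v u \<longrightarrow> u = x \<or> u = y)"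
    using s unfolding S32_def by auto
  define L where "L = {v\<in>V-{x,y}. \<not> E v y}"
  define W where "W = {v\<in>V-{x,y}. E v y}"
  have eL: "\<forall>v\<in>L. \<forall>u. E v u \<longleftrightarrow> u \<in> {x}" using o unfolding L_def by auto
  have eW: "\<forall>v\<in>W. \<forall>u. E v u \<longleftrightarrow> u \<in> {x,y}" using o unfolding W_def by auto
  have Wne: "W \<noteq> {}"
  proof
    assume W0: "W = {}"
    obtain u where u: "E y u" using no_isolated[OF con x(2) x(1)] x by blast
    then have "u \<in> V" "u \<noteq> y" "u \<noteq> x" "E u y" using g(5)[OF u] g(3)[of y] g(2)[OF u] False by auto
    then show False using W0 unfolding W_def by auto
  qed
  show ?thesis
  proof (cases "L = {}")
    case True
    have "\<forall>v\<in>V-{x,y}. E v x \<and> E v y \<and> (\<forall>u. E v u \<longrightarrow> u = x \<or> u = y)"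
    proof
      fix v assume v: "v \<in> V - {x,y}"
      then have "v \<in> W" using True unfolding L_def W_def by auto
      then show "E v x \<and> E v y \<and> (\<forall>u. E v u \<longrightarrow> u = x \<or> u = y)" using eW by blast
    qed
    then have "S22 V E x y" unfolding S22_def using x by auto
    then show ?thesis using S22_fam[OF sg _ card] by blast
  next
    case Lne: False
    have aL: "attached V E {x,y} L {x}" by (rule attI[OF sg]) (use eL x in \<open>auto simp: L_def\<close>)
    have aW: "attached V E {x,y} W {x,y}" by (rule attI[OF sg]) (use eW x in \<open>auto simp: W_def\<close>)
    have V: "V = {x,y} \<union> L \<union> W" using x unfolding L_def W_def by auto
    have "famH3 V E" by (rule famH3_I[OF x False aL aW V Lne Wne])
    then show ?thesis by blast
  qed
qed


lemma famH1_I: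
  assumes "a \<in> V \<and> b \<in> V \<and> c \<in> V \<and> distinct [a, b, c] \<and>
      E a b \<and> E b c \<and> \<not> E a c \<and>
      attached V E {a, b, c} Vb {b} \<and> attached V E {a, b, c} Vab {a, b} \<and>
      attached V E {a, b, c} Vbc {b, c} \<and> attached V E {a, b, c} Vabc {a, b, c} \<and>
      V = {a, b, c} \<union> Vb \<union> Vab \<union> Vbc \<union> Vabc \<and>
      ((Vab = {} \<and> Vbc = {} \<and> card Vabc \<ge> 2)
       \<or> ((Vab = {} \<longleftrightarrow> Vbc \<noteq> {}) \<and> Vabc \<noteq> {})
       \<or> (Vab \<noteq> {} \<and> Vbc \<noteq> {}))"
  shows "famH1 V E"
  unfolding famH1_def by (rule exI[of _ a], rule exI[of _ b], rule exI[of _ c], rule exI[of _ Vb], rule exI[of _ Vab], rule exI[of _ Vbc], rule exI[of _ Vabc]) (rule assms)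

lemma famH2_I:
  assumes "a \<in> V \<and> b \<in> V \<and> c \<in> V \<and> distinct [a, b, c] \<and>
      E a b \<and> E b c \<and> E a c \<and>
      attached V E {a, b, c} Vb {b} \<and> attached V E {a, b, c} Vab {a, b} \<and>
      attached V E {a, b, c} Vbc {b, c} \<and> attached V E {a, b, c} Vabc {a, b, c} \<and>
      V = {a, b, c} \<union> Vb \<union> Vab \<union> Vbc \<union> Vabc \<and>
      (Vabc \<noteq> {} \<or> (Vab \<noteq> {} \<and> Vbc \<noteq> {}))"
  shows "famH2 V E"
  unfolding famH2_def by (rule exI[of _ a], rule exI[of _ b], rule exI[of _ c], rule exI[of _ Vb], rule exI[of _ Vab], rule exI[of _ Vbc], rule exI[of _ Vabc]) (rule assms)

lemma famH4_I:
  assumes "a \<in> V \<and> b \<in> V \<and> c \<in> V \<and> distinct [a, b, c] \<and>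
      E b c \<and> \<not> E a b \<and> \<not> E a c \<and>
      attached V E {a, b, c} Vab {a, b} \<and> attached V E {a, b, c} Vabc {a, b, c} \<and>
      V = {a, b, c} \<union> Vab \<union> Vabc \<and>
      ((Vab = {} \<and> card Vabc \<ge> 2) \<or> Vab \<noteq> {})"
  shows "famH4 V E"
  unfolding famH4_def by (rule exI[of _ a], rule exI[of _ b], rule exI[of _ c], rule exI[of _ Vab], rule exI[of _ Vabc]) (rule assms)

lemma famH5_I:
  assumes "a \<in> V \<and> b \<in> V \<and> c \<in> V \<and> distinct [a, b, c] \<and>
      E a b \<and> E b c \<and> \<not> E a c \<and>
      attached V E {a, b, c} Vab {a, b} \<and> attached V E {a, b, c} Vabc {a, b, c} \<and>
      V = {a, b, c} \<union> Vab \<union> Vabc \<and>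
      ((Vab \<noteq> {} \<and> Vabc \<noteq> {}) \<or> (Vab = {} \<and> card Vabc \<ge> 2))"
  shows "famH5 V E"
  unfolding famH5_def by (rule exI[of _ a], rule exI[of _ b], rule exI[of _ c], rule exI[of _ Vab], rule exI[of _ Vabc]) (rule assms)

lemma famH6_I:
  assumes "a \<in> V \<and> b \<in> V \<and> c \<in> V \<and> distinct [a, b, c] \<and>
      E a b \<and> E b c \<and> \<not> E a c \<and>
      attached V E {a, b, c} Vac {a, c} \<and> attached V E {a, b, c} Vabc {a, b, c} \<and>
      V = {a, b, c} \<union> Vac \<union> Vabc \<and>
      ((Vac \<noteq> {} \<and> Vabc \<noteq> {}) \<or> (Vac = {} \<and> card Vabc \<ge> 2))"
  shows "famH6 V E"
  unfolding famH6_def by (rule exI[of _ a], rule exI[of _ b], rule exI[of _ c], rule exI[of _ Vac], rule exI[of _ Vabc]) (rule assms)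

lemma card2I:
  assumes "finite A" "A \<noteq> {}" "\<forall>w. A \<noteq> {w}" shows "card A \<ge> 2"
proof -
  have "card A \<noteq> 0" using assms by simp
  moreover have "card A \<noteq> 1" using assms card_1_singletonE by metis
  ultimately show ?thesis by linarith
qed

lemma S32_I:
  assumes "x \<in> V" "w \<in> V" "x \<noteq> w" "\<And>v. v \<in> V \<Longrightarrow> v \<noteq> x \<Longrightarrow> v \<noteq> w \<Longrightarrow> E v x"
    "\<And>v u. v \<in> V \<Longrightarrow> v \<noteq> x \<Longrightarrow> v \<noteq> w \<Longrightarrow> E v u \<Longrightarrow> u = x \<or> u = w"
  shows "S32 V E x w"
  unfolding S32_def using assms by blast

lemma S22_I:
  assumes "x \<in> V" "w \<in> V" "x \<noteq> w" "\<And>v. v \<in> V \<Longrightarrow> v \<noteq> x \<Longrightarrow> v \<noteq> w \<Longrightarrow> E v x \<and> E v w"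
    "\<And>v u. v \<in> V \<Longrightarrow> v \<noteq> x \<Longrightarrow> v \<noteq> w \<Longrightarrow> E v u \<Longrightarrow> u = x \<or> u = w"
  shows "S22 V E x w"
  unfolding S22_def using assms by blast

lemma S311_sym: "S311 V E x y z \<Longrightarrow> S311 V E x z y"
  unfolding S311_def by (auto simp: insert_commute)

lemma S311_SG:
  assumes sg: "simple_graph V E" and s: "S311 V E x y z" and nz: "\<forall>v\<in>V-{x,y,z}. \<not> E v z"
  shows "S32 V E x y \<and> E x y"
proof -
  note g = sgE[OF sg]
  have b: "x \<in> V" "y \<in> V" "z \<in> V" "x \<noteq> y" "x \<noteq> z" "y \<noteq> z" "E x y" "E x z"
    and o: "\<forall>v\<in>V-{x,y,z}. E v x \<and> (\<forall>u. E v u \<longrightarrow> u = x \<or> u = y \<or> u = z)"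
    using s unfolding S311_def by auto
  have "S32 V E x y"
  proof (rule S32_I)
    fix v assume v: "v \<in> V" "v \<noteq> x" "v \<noteq> y"
    show "E v x"
    proof (cases "v = z")
      case True then show ?thesis using g(2)[OF b(8)] by simp
    next
      case False then show ?thesis using o v by blast
    qed
  next
    fix v u assume v: "v \<in> V" "v \<noteq> x" "v \<noteq> y" and e: "E v u"
    show "u = x \<or> u = y"
    proof (cases "v = z")
      case True
      show ?thesis
      proof (rule ccontr)
        assume "\<not> (u = x \<or> u = y)"
        moreover have "u \<in> V" "u \<noteq> v" using g(5)[OF e] g(3)[of v] e by auto
        ultimately have "u \<in> V - {x,y,z}" using True by auto
        moreover have "E u z" using g(2)[OF e] True by simp
        ultimately show False using nz by blast
      qed
    next
      case False
      then have "v \<in> V - {x,y,z}" using v by simp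
      then have "u = x \<or> u = y \<or> u = z" "\<not> E v z" using o nz e by auto
      then show ?thesis using e by auto
    qed
  qed (use b in auto)
  then show ?thesis using b by simp
qed


lemma S311_fam:
  assumes sg: "simple_graph V E" and s: "S311 V E x y z"
  shows "is_star V E \<or> famG V E \<or> famH1 V E \<or> famH2 V E"
proof -
  note g = sgE[OF sg]
  have b: "x \<in> V" "y \<in> V" "z \<in> V" "x \<noteq> y" "x \<noteq> z" "y \<noteq> z" "E x y" "E x z"
    and o: "\<forall>v\<in>V-{x,y,z}. E v x \<and> (\<forall>u. E v u \<longrightarrow> u = x \<or> u = y \<or> u = z)"
    using s unfolding S311_def by auto
  define B0 where "B0 = V - {x,y,z}"
  define Vb where "Vb = {v\<in>B0. \<not> E v y \<and> \<not> E v z}"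
  define Vab where "Vab = {v\<in>B0. E v y \<and> \<not> E v z}"
  define Vbc where "Vbc = {v\<in>B0. \<not> E v y \<and> E v z}"
  define Vabc where "Vabc = {v\<in>B0. E v y \<and> E v z}"
  have split: "\<And>v. v \<in> B0 \<Longrightarrow> v \<in> Vb \<or> v \<in> Vab \<or> v \<in> Vbc \<or> v \<in> Vabc"
    unfolding Vb_def Vab_def Vbc_def Vabc_def by blast
  have oB: "\<And>v. v \<in> B0 \<Longrightarrow> E v x \<and> (\<forall>u. E v u \<longrightarrow> u = x \<or> u = y \<or> u = z)" using o unfolding B0_def by blast
  have fin: "finite Vabc" using g(1) unfolding Vabc_def B0_def by simp
  show ?thesis
  proof (cases "Vbc = {} \<and> Vabc = {}")
    case True
    have "\<forall>v\<in>V-{x,y,z}. \<not> E v z"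
    proof
      fix v assume "v \<in> V - {x,y,z}"
      then have "v \<in> B0" unfolding B0_def .
      then show "\<not> E v z" using True unfolding Vbc_def Vabc_def by blast
    qed
    then have "S32 V E x y \<and> E x y" using S311_SG[OF sg s] by blast
    then show ?thesis using SG_fam[OF sg] by blast
  next
    case n1: False
    show ?thesis
    proof (cases "Vab = {} \<and> Vabc = {}")
      case True
      have "\<forall>v\<in>V-{x,z,y}. \<not> E v y"
      proof
        fix v assume "v \<in> V - {x,z,y}"
        then have "v \<in> B0" unfolding B0_def by blast
        then show "\<not> E v y" using True unfolding Vab_def Vabc_def by blast
      qed
      then have "S32 V E x z \<and> E x z" using S311_SG[OF sg S311_sym[OF s]] by blast
      then show ?thesis using SG_fam[OF sg] by blast
    next
      case n2: False
      show ?thesis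
      proof (cases "\<not> E y z \<and> Vab = {} \<and> Vbc = {} \<and> (\<exists>w. Vabc = {w})")
        case True
        then obtain w where w: "Vabc = {w}" and nyz: "\<not> E y z" and e0: "Vab = {}" "Vbc = {}" by blast
        have wB: "w \<in> B0" "E w y" "E w z" using w unfolding Vabc_def by auto
        have wV: "w \<in> V" "w \<noteq> x" "w \<noteq> y" "w \<noteq> z" using wB(1) unfolding B0_def by auto
        have nbB: "\<And>u. u \<in> B0 \<Longrightarrow> E u y \<Longrightarrow> u = w"
        proof -
          fix u assume "u \<in> B0" "E u y"
          then have "u \<in> Vab \<or> u \<in> Vabc" unfolding Vab_def Vabc_def by blast
          then show "u = w" using e0 w by blast
        qed
        have nbB': "\<And>u. u \<in> B0 \<Longrightarrow> E u z \<Longrightarrow> u = w"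
        proof -
          fix u assume "u \<in> B0" "E u z"
          then have "u \<in> Vbc \<or> u \<in> Vabc" unfolding Vbc_def Vabc_def by blast
          then show "u = w" using e0 w by blast
        qed
        have "S32 V E x w"
        proof (rule S32_I)
          show "x \<in> V" "w \<in> V" "x \<noteq> w" using b wV by auto
        next
          fix v assume v: "v \<in> V" "v \<noteq> x" "v \<noteq> w"
          show "E v x"
          proof -
            consider "v = y" | "v = z" | "v \<in> B0" using v unfolding B0_def by blast
            then show ?thesis
            proof cases
              case 1 then show ?thesis using g(2)[OF b(7)] by simp
            next
              case 2 then show ?thesis using g(2)[OF b(8)] by simp
            next
              case 3 then show ?thesis using oB by blast
            qed
          qed
        next
          fix v u assume v: "v \<in> V" "v \<noteq> x" "v \<noteq> w" and e: "E v u"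
          have uV: "u \<in> V" "u \<noteq> v" using g(5)[OF e] g(3)[of v] e by auto
          consider "v = y" | "v = z" | "v \<in> B0" using v unfolding B0_def by blast
          then show "u = x \<or> u = w"
          proof cases
            case 1
            have "u \<noteq> z" using nyz e 1 by auto
            then have "u = x \<or> u \<in> B0" using uV 1 unfolding B0_def by auto
            then show ?thesis using nbB g(2)[OF e] 1 by blast
          next
            case 2
            have "u \<noteq> y" using nyz e 2 g(2)[OF e] by auto
            then have "u = x \<or> u \<in> B0" using uV 2 unfolding B0_def by auto
            then show ?thesis using nbB' g(2)[OF e] 2 by blast
          next
            case 3
            have "v \<notin> Vabc" using v(3) w by blast
            moreover have "v \<notin> Vab" "v \<notin> Vbc" using e0 by auto
            ultimately have "v \<in> Vb" using split[OF 3] by blast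
            then have "\<not> E v y" "\<not> E v z" unfolding Vb_def by auto
            then show ?thesis using oB[OF 3] e by blast
          qed
        qed
        moreover have "E x w" using oB[OF wB(1)] g(2)[of w x] by blast
        ultimately show ?thesis using SG_fam[OF sg] by blast
      next
        case n3: False
        have eVb: "\<forall>v\<in>Vb. \<forall>u. E v u \<longleftrightarrow> u \<in> {x}" using oB unfolding Vb_def by auto
        have eVab: "\<forall>v\<in>Vab. \<forall>u. E v u \<longleftrightarrow> u \<in> {y,x}" using oB unfolding Vab_def by auto
        have eVbc: "\<forall>v\<in>Vbc. \<forall>u. E v u \<longleftrightarrow> u \<in> {x,z}" using oB unfolding Vbc_def by auto
        have eVabc: "\<forall>v\<in>Vabc. \<forall>u. E v u \<longleftrightarrow> u \<in> {y,x,z}" using oB unfolding Vabc_def by auto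
        have sub: "Vb \<subseteq> V - {y,x,z}" "Vab \<subseteq> V - {y,x,z}" "Vbc \<subseteq> V - {y,x,z}" "Vabc \<subseteq> V - {y,x,z}"
          unfolding Vb_def Vab_def Vbc_def Vabc_def B0_def by auto
        have a1: "attached V E {y,x,z} Vb {x}" by (rule attI[OF sg sub(1)]) (use b eVb in auto)
        have a2: "attached V E {y,x,z} Vab {y,x}" by (rule attI[OF sg sub(2)]) (use b eVab in auto)
        have a3: "attached V E {y,x,z} Vbc {x,z}" by (rule attI[OF sg sub(3)]) (use b eVbc in auto)
        have a4: "attached V E {y,x,z} Vabc {y,x,z}" by (rule attI[OF sg sub(4)]) (use b eVabc in auto)
        have VV: "V = {y,x,z} \<union> Vb \<union> Vab \<union> Vbc \<union> Vabc"
        proof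
          show "V \<subseteq> {y,x,z} \<union> Vb \<union> Vab \<union> Vbc \<union> Vabc"
          proof
            fix v assume "v \<in> V"
            then have "v \<in> {y,x,z} \<or> v \<in> B0" unfolding B0_def by blast
            then show "v \<in> {y,x,z} \<union> Vb \<union> Vab \<union> Vbc \<union> Vabc" using split by blast
          qed
          show "{y,x,z} \<union> Vb \<union> Vab \<union> Vbc \<union> Vabc \<subseteq> V" using b sub by blast
        qed
        have d: "distinct [y,x,z]" using b by auto
        have eyx: "E y x" using g(2)[OF b(7)] .
        show ?thesis
        proof (cases "E y z")
          case True
          have c: "Vabc \<noteq> {} \<or> (Vab \<noteq> {} \<and> Vbc \<noteq> {})" using n1 n2 by blast
          have "famH2 V E"
            using b(1,2,3) d eyx True a1 a2 a3 a4 VV c b(8) by (intro famH2_I conjI) assumption+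
          then show ?thesis by blast
        next
          case False
          have c: "(Vab = {} \<and> Vbc = {} \<and> card Vabc \<ge> 2)
             \<or> ((Vab = {} \<longleftrightarrow> Vbc \<noteq> {}) \<and> Vabc \<noteq> {})
             \<or> (Vab \<noteq> {} \<and> Vbc \<noteq> {})"
          proof (cases "Vab = {} \<and> Vbc = {}")
            case True
            then have "Vabc \<noteq> {}" using n1 by blast
            moreover have "\<forall>w. Vabc \<noteq> {w}" using n3 True False by blast
            ultimately have "card Vabc \<ge> 2" using card2I[OF fin] by blast
            then show ?thesis using True by blast
          next
            case nn: False
            show ?thesis
            proof (cases "Vab \<noteq> {} \<and> Vbc \<noteq> {}")
              case True then show ?thesis by blast
            next
              case False
              then have "Vab = {} \<longleftrightarrow> Vbc \<noteq> {}" using nn by blast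
              moreover have "Vabc \<noteq> {}" using n1 n2 calculation by blast
              ultimately show ?thesis by blast
            qed
          qed
          have "famH1 V E"
            using b(1,2,3) d eyx False a1 a2 a3 a4 VV c b(8) by (intro famH1_I conjI) assumption+
          then show ?thesis by blast
        qed
      qed
    qed
  qed
qed


lemma S221_main:
  assumes sg: "simple_graph V E" and s: "S221 V E x y z" and ezx: "E z x" and card: "card V \<ge> 3"
    and con: "connected_graph V E"
  shows "is_star V E \<or> famG V E \<or> famH2 V E \<or> famH4 V E \<or> famH5 V E \<or> famH6 V E"
proof -
  note g = sgE[OF sg]
  have b: "x \<in> V" "y \<in> V" "z \<in> V" "x \<noteq> y" "x \<noteq> z" "y \<noteq> z"
    and o: "\<forall>v\<in>V-{x,y,z}. E v x \<and> E v y \<and> (\<forall>u. E v u \<longrightarrow> u = x \<or> u = y \<or> u = z)"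
    using s unfolding S221_def by auto
  have exz: "E x z" using g(2)[OF ezx] .
  define B0 where "B0 = V - {x,y,z}"
  define S where "S = {v\<in>B0. \<not> E v z}"
  define T where "T = {v\<in>B0. E v z}"
  have split: "\<And>v. v \<in> B0 \<Longrightarrow> v \<in> S \<or> v \<in> T" unfolding S_def T_def by blast
  have oB: "\<And>v. v \<in> B0 \<Longrightarrow> E v x \<and> E v y \<and> (\<forall>u. E v u \<longrightarrow> u = x \<or> u = y \<or> u = z)" using o unfolding B0_def by blast
  have fin: "finite T" using g(1) unfolding T_def B0_def by simp
  have eS: "\<forall>v\<in>S. \<forall>u. E v u \<longleftrightarrow> u \<in> {x,y}" using oB unfolding S_def by auto
  have eT: "\<forall>v\<in>T. \<forall>u. E v u \<longleftrightarrow> u \<in> {x,y,z}" using oB unfolding T_def by auto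
  have subS: "S \<subseteq> V - {x,y,z}" and subT: "T \<subseteq> V - {x,y,z}" unfolding S_def T_def B0_def by auto
  have VV: "V = {x,y,z} \<union> S \<union> T"
  proof
    show "V \<subseteq> {x,y,z} \<union> S \<union> T"
    proof
      fix v assume "v \<in> V"
      then have "v \<in> {x,y,z} \<or> v \<in> B0" unfolding B0_def by blast
      then show "v \<in> {x,y,z} \<union> S \<union> T" using split by blast
    qed
    show "{x,y,z} \<union> S \<union> T \<subseteq> V" using b subS subT by blast
  qed
  have zB: "\<And>u. E z u \<Longrightarrow> u \<noteq> x \<Longrightarrow> u \<noteq> y \<Longrightarrow> u \<in> T"
  proof -
    fix u assume e: "E z u" "u \<noteq> x" "u \<noteq> y"
    have "u \<in> V" "u \<noteq> z" using g(5)[OF e(1)] g(3)[of z] e(1) by auto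
    then have "u \<in> B0" using e unfolding B0_def by auto
    then show "u \<in> T" using g(2)[OF e(1)] unfolding T_def by blast
  qed
  have xB: "\<And>u. E x u \<Longrightarrow> u \<noteq> y \<Longrightarrow> u \<noteq> z \<Longrightarrow> u \<in> S \<or> u \<in> T"
  proof -
    fix u assume e: "E x u" "u \<noteq> y" "u \<noteq> z"
    have "u \<in> V" "u \<noteq> x" using g(5)[OF e(1)] g(3)[of x] e(1) by auto
    then have "u \<in> B0" using e unfolding B0_def by auto
    then show "u \<in> S \<or> u \<in> T" using split by blast
  qed
  have yB: "\<And>u. E y u \<Longrightarrow> u \<noteq> x \<Longrightarrow> u \<noteq> z \<Longrightarrow> u \<in> S \<or> u \<in> T"
  proof -
    fix u assume e: "E y u" "u \<noteq> x" "u \<noteq> z"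
    have "u \<in> V" "u \<noteq> y" using g(5)[OF e(1)] g(3)[of y] e(1) by auto
    then have "u \<in> B0" using e unfolding B0_def by auto
    then show "u \<in> S \<or> u \<in> T" using split by blast
  qed
  have TB: "\<And>v. v \<in> T \<Longrightarrow> v \<in> B0" unfolding T_def by blast
  have SB: "\<And>v. v \<in> S \<Longrightarrow> v \<in> B0" unfolding S_def by blast
  have T0: "is_star V E \<or> famG V E" if T0: "T = {}" and exy: "E x y"
  proof -
    have "S32 V E x y"
    proof (rule S32_I)
      fix v assume v: "v \<in> V" "v \<noteq> x" "v \<noteq> y"
      then consider "v = z" | "v \<in> B0" unfolding B0_def by blast
      then show "E v x" using ezx oB by cases auto
    next
      fix v u assume v: "v \<in> V" "v \<noteq> x" "v \<noteq> y" and e: "E v u"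
      then consider "v = z" | "v \<in> B0" unfolding B0_def by blast
      then show "u = x \<or> u = y"
      proof cases
        case 1 then show ?thesis using zB[of u] e T0 by blast
      next
        case 2
        then have "v \<in> S" using split T0 by blast
        then show ?thesis using eS e by blast
      qed
    qed (use b in auto)
    then show ?thesis using SG_fam[OF sg _ exy] by blast
  qed
  show ?thesis
  proof (cases "E x y")
    case exy: True
    have eyx: "E y x" using g(2)[OF exy] .
    show ?thesis
    proof (cases "E z y")
      case True
      show ?thesis
      proof (cases "T = {}")
        case True then show ?thesis using T0 exy by blast
      next
        case False
        have a1: "attached V E {x,y,z} {} {y}" unfolding attached_def by blast
        have a2: "attached V E {x,y,z} S {x,y}" by (rule attI[OF sg subS]) (use b eS in auto)
        have a3: "attached V E {x,y,z} {} {y,z}" unfolding attached_def by blast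
        have a4: "attached V E {x,y,z} T {x,y,z}" by (rule attI[OF sg subT]) (use b eT in auto)
        have VV': "V = {x,y,z} \<union> {} \<union> S \<union> {} \<union> T" using VV by simp
        have d: "distinct [x,y,z]" using b by auto
        have c: "T \<noteq> {} \<or> (S \<noteq> {} \<and> {} \<noteq> {})" using False by blast
        have eyz: "E y z" using g(2)[OF True] .
        have "famH2 V E"
          using b(1,2,3) d exy eyz exz a1 a2 a3 a4 VV' c by (intro famH2_I conjI) assumption+
        then show ?thesis by blast
      qed
    next
      case nzy: False
      show ?thesis
      proof (cases "(S \<noteq> {} \<and> T \<noteq> {}) \<or> (S = {} \<and> card T \<ge> 2)")
        case True
        have a2: "attached V E {y,x,z} S {y,x}" by (rule attI[OF sg]) (use b eS subS in auto)
        have a4: "attached V E {y,x,z} T {y,x,z}" by (rule attI[OF sg]) (use b eT subT in auto)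
        have VV': "V = {y,x,z} \<union> S \<union> T" using VV by auto
        have d: "distinct [y,x,z]" using b by auto
        have nyz: "\<not> E y z" using nzy g(2) by blast
        have "famH5 V E"
          using b(1,2,3) d eyx exz nyz a2 a4 VV' True by (intro famH5_I conjI) assumption+
        then show ?thesis by blast
      next
        case False
        show ?thesis
        proof (cases "T = {}")
          case True then show ?thesis using T0 exy by blast
        next
          case Tne: False
          then have S0: "S = {}" using False by blast
          have "\<not> card T \<ge> 2" using False S0 by blast
          then obtain w where w: "T = {w}" using Tne fin card2I by blast
          have wB: "w \<in> B0" using w TB by blast
          have ewz: "E w z" using w unfolding T_def by blast
          have wV: "w \<in> V" "w \<noteq> x" "w \<noteq> y" "w \<noteq> z" using wB unfolding B0_def by auto
          have "S32 V E x w"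
          proof (rule S32_I)
            fix v assume v: "v \<in> V" "v \<noteq> x" "v \<noteq> w"
            then consider "v = y" | "v = z" | "v \<in> B0" unfolding B0_def by blast
            then show "E v x" using ezx eyx oB by cases auto
          next
            fix v u assume v: "v \<in> V" "v \<noteq> x" "v \<noteq> w" and e: "E v u"
            then consider "v = y" | "v = z" | "v \<in> B0" unfolding B0_def by blast
            then show "u = x \<or> u = w"
            proof cases
              case 1
              have "u \<noteq> z" using nzy e 1 g(2)[of y u] by auto
              then show ?thesis using yB[of u] e 1 S0 w by blast
            next
              case 2
              have "u \<noteq> y" using nzy e 2 by auto
              then show ?thesis using zB[of u] e 2 w by blast
            next
              case 3
              then have "v \<in> S \<or> v \<in> T" using split by blast
              then show ?thesis using S0 w v by blast
            qed
          qed (use b wV in auto)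
          moreover have "E x w" using oB[OF wB] g(2)[of w x] by blast
          ultimately show ?thesis using SG_fam[OF sg] by blast
        qed
      qed
    qed
  next
    case nxy: False
    have nyx: "\<not> E y x" using nxy g(2)[of y x] by blast
    show ?thesis
    proof (cases "E z y")
      case ezy: True
      have ezy': "E y z" using g(2)[OF ezy] .
      show ?thesis
      proof (cases "(S \<noteq> {} \<and> T \<noteq> {}) \<or> (S = {} \<and> card T \<ge> 2)")
        case True
        have a2: "attached V E {x,z,y} S {x,y}" by (rule attI[OF sg]) (use b eS subS in auto)
        have a4: "attached V E {x,z,y} T {x,z,y}" by (rule attI[OF sg]) (use b eT subT in auto)
        have VV': "V = {x,z,y} \<union> S \<union> T" using VV by auto
        have d: "distinct [x,z,y]" using b by auto
        have "famH6 V E"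
          using b(1,2,3) d exz ezy nxy a2 a4 VV' True by (intro famH6_I conjI) assumption+
        then show ?thesis by blast
      next
        case False
        show ?thesis
        proof (cases "T = {}")
          case True
          have "S22 V E x y"
          proof (rule S22_I)
            fix v assume v: "v \<in> V" "v \<noteq> x" "v \<noteq> y"
            then consider "v = z" | "v \<in> B0" unfolding B0_def by blast
            then show "E v x \<and> E v y" using ezx ezy oB by cases auto
          next
            fix v u assume v: "v \<in> V" "v \<noteq> x" "v \<noteq> y" and e: "E v u"
            then consider "v = z" | "v \<in> B0" unfolding B0_def by blast
            then show "u = x \<or> u = y"
            proof cases
              case 1 then show ?thesis using zB[of u] e True by blast
            next
              case 2
              then have "v \<in> S" using split True by blast
              then show ?thesis using eS e by blast
            qed
          qed (use b in auto)
          then show ?thesis using S22_fam[OF sg _ card] by blast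
        next
          case Tne: False
          then have S0: "S = {}" using False by blast
          have "\<not> card T \<ge> 2" using False S0 by blast
          then obtain w where w: "T = {w}" using Tne fin card2I by blast
          have wB: "w \<in> B0" using w TB by blast
          have ewz: "E w z" using w unfolding T_def by blast
          have wV: "w \<in> V" "w \<noteq> x" "w \<noteq> y" "w \<noteq> z" using wB unfolding B0_def by auto
          have "S32 V E z w"
          proof (rule S32_I)
            fix v assume v: "v \<in> V" "v \<noteq> z" "v \<noteq> w"
            then consider "v = x" | "v = y" | "v \<in> B0" unfolding B0_def by blast
            then show "E v z"
            proof cases
              case 3 then have "v \<in> S \<or> v \<in> T" using split by blast
              then show ?thesis using S0 w v by blast
            qed (use exz ezy' in auto)
          next
            fix v u assume v: "v \<in> V" "v \<noteq> z" "v \<noteq> w" and e: "E v u"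
            then consider "v = x" | "v = y" | "v \<in> B0" unfolding B0_def by blast
            then show "u = z \<or> u = w"
            proof cases
              case 1
              have "u \<noteq> y" using nxy e 1 by auto
              then show ?thesis using xB[of u] e 1 S0 w by blast
            next
              case 2
              have "u \<noteq> x" using nyx e 2 by auto
              then show ?thesis using yB[of u] e 2 S0 w by blast
            next
              case 3
              then have "v \<in> S \<or> v \<in> T" using split by blast
              then show ?thesis using S0 w v by blast
            qed
          qed (use b wV in auto)
          moreover have "E z w" using g(2)[OF ewz] .
          ultimately show ?thesis using SG_fam[OF sg] by blast
        qed
      qed
    next
      case nzy: False
      have nyz: "\<not> E y z" using nzy g(2)[of y z] by blast
      show ?thesis
      proof (cases "(S = {} \<and> card T \<ge> 2) \<or> S \<noteq> {}")
        case True
        have a2: "attached V E {y,x,z} S {y,x}" by (rule attI[OF sg]) (use b eS subS in auto)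
        have a4: "attached V E {y,x,z} T {y,x,z}" by (rule attI[OF sg]) (use b eT subT in auto)
        have VV': "V = {y,x,z} \<union> S \<union> T" using VV by auto
        have d: "distinct [y,x,z]" using b by auto
        have "famH4 V E"
          using b(1,2,3) d exz nyx nyz a2 a4 VV' True by (intro famH4_I conjI) assumption+
        then show ?thesis by blast
      next
        case False
        then have S0: "S = {}" and nc: "\<not> card T \<ge> 2" by auto
        have Tne: "T \<noteq> {}"
        proof
          assume T0: "T = {}"
          obtain u where e: "E y u" using no_isolated[OF con b(2) b(1)] b by blast
          have "u \<noteq> x" "u \<noteq> z" using e nyx nyz by auto
          then show False using yB[OF e] S0 T0 by blast
        qed
        then obtain w where w: "T = {w}" using nc fin card2I by blast
        have wB: "w \<in> B0" using w TB by blast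
        have ewz: "E w z" using w unfolding T_def by blast
        have wV: "w \<in> V" "w \<noteq> x" "w \<noteq> y" "w \<noteq> z" using wB unfolding B0_def by auto
        have "S32 V E w x"
        proof (rule S32_I)
          fix v assume v: "v \<in> V" "v \<noteq> w" "v \<noteq> x"
          then consider "v = y" | "v = z" | "v \<in> B0" unfolding B0_def by blast
          then show "E v w"
          proof cases
            case 1 then show ?thesis using oB[OF wB] g(2)[of w y] by blast
          next
            case 2 then show ?thesis using g(2)[OF ewz] by simp
          next
            case 3 then have "v \<in> S \<or> v \<in> T" using split by blast
            then show ?thesis using S0 w v by blast
          qed
        next
          fix v u assume v: "v \<in> V" "v \<noteq> w" "v \<noteq> x" and e: "E v u"
          then consider "v = y" | "v = z" | "v \<in> B0" unfolding B0_def by blast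
          then show "u = w \<or> u = x"
          proof cases
            case 1
            have "u \<noteq> x" "u \<noteq> z" using nyx nyz e 1 by auto
            then show ?thesis using yB[of u] e 1 S0 w by blast
          next
            case 2
            have "u \<noteq> y" using nzy e 2 by auto
            then show ?thesis using zB[of u] e 2 w by blast
          next
            case 3
            then have "v \<in> S \<or> v \<in> T" using split by blast
            then show ?thesis using S0 w v by blast
          qed
        qed (use b wV in auto)
        moreover have "E w x" using oB[OF wB] by blast
        ultimately show ?thesis using SG_fam[OF sg] by blast
      qed
    qed
  qed
qed

lemma S221_sym: "S221 V E x y z \<Longrightarrow> S221 V E y x z"
  unfolding S221_def by (auto simp: insert_commute)

lemma S221_fam:
  assumes sg: "simple_graph V E" and s: "S221 V E x y z" and card: "card V \<ge> 3"
    and con: "connected_graph V E"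
  shows "is_star V E \<or> famG V E \<or> famH2 V E \<or> famH4 V E \<or> famH5 V E \<or> famH6 V E"
proof (cases "E z x")
  case True then show ?thesis using S221_main[OF sg s True card con] by blast
next
  case False
  then have "E z y" using s unfolding S221_def by blast
  then show ?thesis using S221_main[OF sg S221_sym[OF s] _ card con] by blast
qed


definition Q4 :: "'a set \<Rightarrow> ('a \<Rightarrow> 'a \<Rightarrow> bool) \<Rightarrow> 'a \<Rightarrow> 'a \<Rightarrow> bool" where
  "Q4 V E x y \<longleftrightarrow> S32 V E x y \<and> (E x y \<or> (\<forall>v\<in>V-{x,y}. E v y))"

lemma Q4_cov:
  assumes sg: "simple_graph V E" and q: "Q4 V E x y"
  shows "\<And>u v. E u v \<Longrightarrow> u = x \<or> u = y \<or> v = x \<or> v = y"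
proof -
  fix u v assume e: "E u v"
  have "u \<in> V" using sgE(4)[OF sg e] .
  then show "u = x \<or> u = y \<or> v = x \<or> v = y" using q e unfolding Q4_def S32_def by blast
qed

lemma bowtie:
  assumes cov: "\<And>u v. E u v \<Longrightarrow> u = x \<or> u = y \<or> v = x \<or> v = y"
    and e: "E p q" "E p r" "E q r" "E p s" "E p t" "E s t" and d: "distinct [p,q,r,s,t]"
  shows False
proof -
  have "p = x \<or> p = y \<or> q = x \<or> q = y" "p = x \<or> p = y \<or> r = x \<or> r = y" "q = x \<or> q = y \<or> r = x \<or> r = y"
       "p = x \<or> p = y \<or> s = x \<or> s = y" "p = x \<or> p = y \<or> t = x \<or> t = y" "s = x \<or> s = y \<or> t = x \<or> t = y"
    using cov e by blast+
  then show False using d by auto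
qed

lemma k4:
  assumes cov: "\<And>u v. E u v \<Longrightarrow> u = x \<or> u = y \<or> v = x \<or> v = y"
    and e: "E p q" "E p r" "E q r" "E p s" "E q s" "E r s" and d: "distinct [p,q,r,s]"
  shows False
proof -
  have "p = x \<or> p = y \<or> q = x \<or> q = y" "p = x \<or> p = y \<or> r = x \<or> r = y" "q = x \<or> q = y \<or> r = x \<or> r = y"
       "p = x \<or> p = y \<or> s = x \<or> s = y" "q = x \<or> q = y \<or> s = x \<or> s = y" "r = x \<or> r = y \<or> s = x \<or> s = y"
    using cov e by blast+
  then show False using d by auto
qed

lemma h4a4:
  assumes cov: "\<And>u v. E u v \<Longrightarrow> u = x \<or> u = y \<or> v = x \<or> v = y"
    and e: "E b c" "E b w1" "E c w1" "E b w2" "E c w2" "E a w1" "E a w2" and d: "distinct [a,b,c,w1,w2]"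
  shows False
proof -
  have "b = x \<or> b = y \<or> c = x \<or> c = y" "b = x \<or> b = y \<or> w1 = x \<or> w1 = y" "c = x \<or> c = y \<or> w1 = x \<or> w1 = y"
       "b = x \<or> b = y \<or> w2 = x \<or> w2 = y" "c = x \<or> c = y \<or> w2 = x \<or> w2 = y" "a = x \<or> a = y \<or> w1 = x \<or> w1 = y"
       "a = x \<or> a = y \<or> w2 = x \<or> w2 = y"
    using cov e by blast+
  then show False using d by auto
qed

lemma h6a6:
  assumes cov: "\<And>u v. E u v \<Longrightarrow> u = x \<or> u = y \<or> v = x \<or> v = y"
    and e: "E a b" "E b c" "E p a" "E p c" "E w a" "E w b" "E w c" and d: "distinct [a,b,c,p,w]"
  shows False
proof -
  have "a = x \<or> a = y \<or> b = x \<or> b = y" "b = x \<or> b = y \<or> c = x \<or> c = y" "p = x \<or> p = y \<or> a = x \<or> a = y"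
       "p = x \<or> p = y \<or> c = x \<or> c = y" "w = x \<or> w = y \<or> a = x \<or> a = y" "w = x \<or> w = y \<or> b = x \<or> b = y"
       "w = x \<or> w = y \<or> c = x \<or> c = y"
    using cov e by blast+
  then show False using d by auto
qed

lemma card2E:
  assumes "card A \<ge> 2" obtains w1 w2 where "w1 \<in> A" "w2 \<in> A" "w1 \<noteq> w2"
proof -
  have "finite A" "A \<noteq> {}" using assms card.infinite by fastforce+
  then obtain w1 where w1: "w1 \<in> A" by blast
  have "\<exists>w2\<in>A. w2 \<noteq> w1"
  proof (rule ccontr)
    assume "\<not> ?thesis"
    then have "A \<subseteq> {w1}" by blast
    then have "card A \<le> 1" using card_mono[of "{w1}" A] by simp
    then show False using assms by simp
  qed
  then show ?thesis using that w1 by blast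
qed

lemma att_sub: "attached V E B S X \<Longrightarrow> S \<subseteq> V - B"
  unfolding attached_def by blast


lemma H1_notQ4:
  assumes sg: "simple_graph V E" and H: "famH1 V E" and q: "Q4 V E x y"
  shows False
proof -
  note g = sgE[OF sg]
  note cov = Q4_cov[OF sg q]
  obtain a b c Vb Vab Vbc Vabc where b: "a \<in> V" "b \<in> V" "c \<in> V" "distinct [a, b, c]" "E a b" "E b c" "\<not> E a c"
    and a2: "attached V E {a, b, c} Vab {a, b}"
    and a3: "attached V E {a, b, c} Vbc {b, c}" and a4: "attached V E {a, b, c} Vabc {a, b, c}"
    and c: "(Vab = {} \<and> Vbc = {} \<and> card Vabc \<ge> 2)
       \<or> ((Vab = {} \<longleftrightarrow> Vbc \<noteq> {}) \<and> Vabc \<noteq> {})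
       \<or> (Vab \<noteq> {} \<and> Vbc \<noteq> {})"
    using H unfolding famH1_def by blast
  have e2: "\<And>v u. v \<in> Vab \<Longrightarrow> E v u \<longleftrightarrow> u = a \<or> u = b" using attE[OF sg a2] b by auto
  have e3: "\<And>v u. v \<in> Vbc \<Longrightarrow> E v u \<longleftrightarrow> u = b \<or> u = c" using attE[OF sg a3] b by auto
  have e4: "\<And>v u. v \<in> Vabc \<Longrightarrow> E v u \<longleftrightarrow> u = a \<or> u = b \<or> u = c" using attE[OF sg a4] b by auto
  have s2: "Vab \<subseteq> V - {a,b,c}" using att_sub[OF a2] .
  have s3: "Vbc \<subseteq> V - {a,b,c}" using att_sub[OF a3] .
  have s4: "Vabc \<subseteq> V - {a,b,c}" using att_sub[OF a4] .
  have eba: "E b a" using g(2)[OF b(5)] .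
  have tri: "False" if p: "E p a" "E p b" "p \<notin> {a,b,c}" and q: "E q c" "E q b" "q \<notin> {a,b,c}" "p \<noteq> q" for p q
    using bowtie[OF cov eba g(2)[OF p(2)] g(2)[OF p(1)] b(6) g(2)[OF q(2)] g(2)[OF q(1)]] b(4) p(3) q(3,4) by auto
  consider "Vab = {} \<and> Vbc = {} \<and> card Vabc \<ge> 2" | "(Vab = {} \<longleftrightarrow> Vbc \<noteq> {}) \<and> Vabc \<noteq> {}" | "Vab \<noteq> {} \<and> Vbc \<noteq> {}"
    using c by blast
  then show False
  proof cases
    case 1
    then obtain w1 w2 where w: "w1 \<in> Vabc" "w2 \<in> Vabc" "w1 \<noteq> w2" using card2E by blast
    show False using tri[of w1 w2] w e4 s4 by blast
  next
    case 2
    then obtain w where w: "w \<in> Vabc" by blast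
    show False
    proof (cases "Vab = {}")
      case True
      then obtain q where q: "q \<in> Vbc" using 2 by blast
      have "q \<noteq> w" using e3[OF q, of a] e4[OF w, of a] b(4) by auto
      then show False using tri[of w q] w q e3 e4 s3 s4 by blast
    next
      case False
      then obtain p where p: "p \<in> Vab" by blast
      have "p \<noteq> w" using e2[OF p, of c] e4[OF w, of c] b(4) by auto
      then show False using tri[of p w] w p e2 e4 s2 s4 by blast
    qed
  next
    case 3
    then obtain p q where p: "p \<in> Vab" and q: "q \<in> Vbc" by blast
    have "p \<noteq> q" using e2[OF p, of c] e3[OF q, of c] b(4) by auto
    then show False using tri[of p q] p q e2 e3 s2 s3 by blast
  qed
qed

lemma H2_notQ4:
  assumes sg: "simple_graph V E" and H: "famH2 V E" and q: "Q4 V E x y"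
  shows False
proof -
  note g = sgE[OF sg]
  note cov = Q4_cov[OF sg q]
  obtain a b c Vb Vab Vbc Vabc where b: "a \<in> V" "b \<in> V" "c \<in> V" "distinct [a, b, c]" "E a b" "E b c" "E a c"
    and a2: "attached V E {a, b, c} Vab {a, b}"
    and a3: "attached V E {a, b, c} Vbc {b, c}" and a4: "attached V E {a, b, c} Vabc {a, b, c}"
    and c: "Vabc \<noteq> {} \<or> (Vab \<noteq> {} \<and> Vbc \<noteq> {})"
    using H unfolding famH2_def by blast
  have e2: "\<And>v u. v \<in> Vab \<Longrightarrow> E v u \<longleftrightarrow> u = a \<or> u = b" using attE[OF sg a2] b by auto
  have e3: "\<And>v u. v \<in> Vbc \<Longrightarrow> E v u \<longleftrightarrow> u = b \<or> u = c" using attE[OF sg a3] b by auto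
  have e4: "\<And>v u. v \<in> Vabc \<Longrightarrow> E v u \<longleftrightarrow> u = a \<or> u = b \<or> u = c" using attE[OF sg a4] b by auto
  have s2: "Vab \<subseteq> V - {a,b,c}" using att_sub[OF a2] .
  have s3: "Vbc \<subseteq> V - {a,b,c}" using att_sub[OF a3] .
  have s4: "Vabc \<subseteq> V - {a,b,c}" using att_sub[OF a4] .
  have eba: "E b a" using g(2)[OF b(5)] .
  show False
  proof (cases "Vabc = {}")
    case False
    then obtain w where w: "w \<in> Vabc" by blast
    have ew: "E w a" "E w b" "E w c" using e4[OF w] by auto
    have "w \<notin> {a,b,c}" using w s4 by blast
    then show False
      using k4[OF cov b(5) b(7) b(6) g(2)[OF ew(1)] g(2)[OF ew(2)] g(2)[OF ew(3)]] b(4) by auto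
  next
    case True
    then obtain p q where p: "p \<in> Vab" and q: "q \<in> Vbc" using c by blast
    have ep: "E p a" "E p b" "\<not> E p c" using e2[OF p] b(4) by auto
    have eq: "E q b" "E q c" "\<not> E q a" using e3[OF q] b(4) by auto
    have "p \<notin> {a,b,c}" "q \<notin> {a,b,c}" using p q s2 s3 by blast+
    moreover have "p \<noteq> q" using ep eq by auto
    ultimately show False
      using bowtie[OF cov eba g(2)[OF ep(2)] g(2)[OF ep(1)] b(6) g(2)[OF eq(1)] g(2)[OF eq(2)]] b(4) by auto
  qed
qed

lemma H5_notQ4:
  assumes sg: "simple_graph V E" and H: "famH5 V E" and q: "Q4 V E x y"
  shows False
proof -
  note g = sgE[OF sg]
  note cov = Q4_cov[OF sg q]
  obtain a b c Vab Vabc where b: "a \<in> V" "b \<in> V" "c \<in> V" "distinct [a, b, c]" "E a b" "E b c" "\<not> E a c"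
    and a2: "attached V E {a, b, c} Vab {a, b}" and a4: "attached V E {a, b, c} Vabc {a, b, c}"
    and c: "(Vab \<noteq> {} \<and> Vabc \<noteq> {}) \<or> (Vab = {} \<and> card Vabc \<ge> 2)"
    using H unfolding famH5_def by blast
  have e2: "\<And>v u. v \<in> Vab \<Longrightarrow> E v u \<longleftrightarrow> u = a \<or> u = b" using attE[OF sg a2] b by auto
  have e4: "\<And>v u. v \<in> Vabc \<Longrightarrow> E v u \<longleftrightarrow> u = a \<or> u = b \<or> u = c" using attE[OF sg a4] b by auto
  have s2: "Vab \<subseteq> V - {a,b,c}" using att_sub[OF a2] .
  have s4: "Vabc \<subseteq> V - {a,b,c}" using att_sub[OF a4] .
  have eba: "E b a" using g(2)[OF b(5)] .
  obtain p w where p: "E p a" "E p b" "p \<notin> {a,b,c}" and w: "E w b" "E w c" "w \<notin> {a,b,c}" and pw: "p \<noteq> w"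
  proof (cases "Vab \<noteq> {} \<and> Vabc \<noteq> {}")
    case True
    then obtain p w where p: "p \<in> Vab" and w: "w \<in> Vabc" by blast
    have ep: "E p a" "E p b" "\<not> E p c" using e2[OF p] b(4) by auto
    have ew: "E w b" "E w c" using e4[OF w] by auto
    have "p \<notin> {a,b,c}" "w \<notin> {a,b,c}" using p w s2 s4 by blast+
    moreover have "p \<noteq> w" using ep ew by auto
    ultimately show ?thesis using that ep ew by blast
  next
    case False
    then have "card Vabc \<ge> 2" using c by blast
    then obtain w1 w2 where w: "w1 \<in> Vabc" "w2 \<in> Vabc" "w1 \<noteq> w2" using card2E by blast
    have "E w1 a" "E w1 b" "E w2 b" "E w2 c" using e4 w by auto
    moreover have "w1 \<notin> {a,b,c}" "w2 \<notin> {a,b,c}" using w s4 by blast+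
    ultimately show ?thesis using that w(3) by blast
  qed
  show False
    using bowtie[OF cov eba g(2)[OF p(2)] g(2)[OF p(1)] b(6) g(2)[OF w(1)] g(2)[OF w(2)]] b(4) p(3) w(3) pw by auto
qed

lemma H6_notQ4:
  assumes sg: "simple_graph V E" and H: "famH6 V E" and q: "Q4 V E x y"
  shows False
proof -
  note g = sgE[OF sg]
  note cov = Q4_cov[OF sg q]
  obtain a b c Vac Vabc where b: "a \<in> V" "b \<in> V" "c \<in> V" "distinct [a, b, c]" "E a b" "E b c" "\<not> E a c"
    and a2: "attached V E {a, b, c} Vac {a, c}" and a4: "attached V E {a, b, c} Vabc {a, b, c}"
    and c: "(Vac \<noteq> {} \<and> Vabc \<noteq> {}) \<or> (Vac = {} \<and> card Vabc \<ge> 2)"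
    using H unfolding famH6_def by blast
  have e2: "\<And>v u. v \<in> Vac \<Longrightarrow> E v u \<longleftrightarrow> u = a \<or> u = c" using attE[OF sg a2] b by auto
  have e4: "\<And>v u. v \<in> Vabc \<Longrightarrow> E v u \<longleftrightarrow> u = a \<or> u = b \<or> u = c" using attE[OF sg a4] b by auto
  have s2: "Vac \<subseteq> V - {a,b,c}" using att_sub[OF a2] .
  have s4: "Vabc \<subseteq> V - {a,b,c}" using att_sub[OF a4] .
  have eba: "E b a" using g(2)[OF b(5)] .
  show False
  proof (cases "Vac \<noteq> {} \<and> Vabc \<noteq> {}")
    case True
    then obtain p w where p: "p \<in> Vac" and w: "w \<in> Vabc" by blast
    have ep: "E p a" "E p c" "\<not> E p b" using e2[OF p] b(4) by auto
    have ew: "E w a" "E w b" "E w c" using e4[OF w] by auto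
    have "p \<notin> {a,b,c}" "w \<notin> {a,b,c}" using p w s2 s4 by blast+
    moreover have "p \<noteq> w" using ep ew by auto
    ultimately show False using h6a6[OF cov b(5) b(6) ep(1) ep(2) ew] b(4) by auto
  next
    case False
    then have "card Vabc \<ge> 2" using c by blast
    then obtain w1 w2 where w: "w1 \<in> Vabc" "w2 \<in> Vabc" "w1 \<noteq> w2" using card2E by blast
    have e: "E w1 a" "E w1 b" "E w2 b" "E w2 c" using e4 w by auto
    moreover have "w1 \<notin> {a,b,c}" "w2 \<notin> {a,b,c}" using w s4 by blast+
    ultimately show False
      using bowtie[OF cov eba g(2)[OF e(2)] g(2)[OF e(1)] b(6) g(2)[OF e(3)] g(2)[OF e(4)]] b(4) w(3) by auto
  qed
qed

lemma H4_notQ4: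
  assumes sg: "simple_graph V E" and H: "famH4 V E" and q: "Q4 V E x y"
  shows False
proof -
  note g = sgE[OF sg]
  note cov = Q4_cov[OF sg q]
  obtain a b c Vab Vabc where b: "a \<in> V" "b \<in> V" "c \<in> V" "distinct [a, b, c]" "E b c" "\<not> E a b" "\<not> E a c"
    and a2: "attached V E {a, b, c} Vab {a, b}" and a4: "attached V E {a, b, c} Vabc {a, b, c}"
    and c: "(Vab = {} \<and> card Vabc \<ge> 2) \<or> Vab \<noteq> {}"
    using H unfolding famH4_def by blast
  have e2: "\<And>v u. v \<in> Vab \<Longrightarrow> E v u \<longleftrightarrow> u = a \<or> u = b" using attE[OF sg a2] b by auto
  have e4: "\<And>v u. v \<in> Vabc \<Longrightarrow> E v u \<longleftrightarrow> u = a \<or> u = b \<or> u = c" using attE[OF sg a4] b by auto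
  have s2: "Vab \<subseteq> V - {a,b,c}" using att_sub[OF a2] .
  have s4: "Vabc \<subseteq> V - {a,b,c}" using att_sub[OF a4] .
  show False
  proof (cases "Vab = {}")
    case True
    then have "card Vabc \<ge> 2" using c by blast
    then obtain w1 w2 where w: "w1 \<in> Vabc" "w2 \<in> Vabc" "w1 \<noteq> w2" using card2E by blast
    have e: "E w1 a" "E w1 b" "E w1 c" "E w2 a" "E w2 b" "E w2 c" using e4 w by auto
    moreover have "w1 \<notin> {a,b,c}" "w2 \<notin> {a,b,c}" using w s4 by blast+
    ultimately show False
      using h4a4[OF cov b(5) g(2)[OF e(2)] g(2)[OF e(3)] g(2)[OF e(5)] g(2)[OF e(6)] g(2)[OF e(1)] g(2)[OF e(4)]] b(4) w(3) by auto
  next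
    case False
    then obtain p where p: "p \<in> Vab" by blast
    have ep: "E p a" "E p b" "\<not> E p c" using e2[OF p] b(4) by auto
    have pn: "p \<noteq> a" "p \<noteq> b" "p \<noteq> c" "p \<in> V" using p s2 by auto
    have d: "a \<noteq> b" "a \<noteq> c" "b \<noteq> c" using b(4) by auto
    have nba: "\<not> E b a" "\<not> E c a" "\<not> E c p" using b(6,7) ep(3) g(2) by blast+
    have eap: "E a p" using g(2)[OF ep(1)] .
    have xy: "x \<noteq> y" "x \<in> V" "y \<in> V" and Q1: "\<forall>v\<in>V-{x,y}. E v x" and Q2: "\<forall>v\<in>V-{x,y}. \<forall>u. E v u \<longrightarrow> u = x \<or> u = y"
      and Q3: "E x y \<or> (\<forall>v\<in>V-{x,y}. E v y)"
      using q unfolding Q4_def S32_def by auto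
    have q1a: "a \<noteq> x \<Longrightarrow> a \<noteq> y \<Longrightarrow> E a x" and q1c: "c \<noteq> x \<Longrightarrow> c \<noteq> y \<Longrightarrow> E c x"
      using Q1 b(1,3) by auto
    have q2p: "p \<noteq> x \<Longrightarrow> p \<noteq> y \<Longrightarrow> b = x \<or> b = y" using Q2 pn(4) ep(2) by blast
    have q3: "E x y \<or> ((a \<noteq> x \<longrightarrow> a \<noteq> y \<longrightarrow> E a y) \<and> (c \<noteq> x \<longrightarrow> c \<noteq> y \<longrightarrow> E c y))" using Q3 b(1,3) by blast
    have c1: "b = x \<or> b = y \<or> c = x \<or> c = y" using cov[OF b(5)] .
    have c2: "a = x \<or> a = y \<or> p = x \<or> p = y" using cov[OF eap] .
    have "(x = b \<and> y = a) \<or> (x = a \<and> y = b) \<or> (x = b \<and> y = p) \<or> (x = p \<and> y = b)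
       \<or> (x = c \<and> y = a) \<or> (x = a \<and> y = c) \<or> (x = c \<and> y = p) \<or> (x = p \<and> y = c)"
      using c1 c2 xy(1) d pn(1-3) by blast
    then show False
    proof (elim disjE conjE)
      assume "x = b" "y = a" then show False using q3 b(6) nba d by auto
    next
      assume "x = a" "y = b" then show False using q1c nba d by auto
    next
      assume "x = b" "y = p" then show False using q1a b(6) d pn by auto
    next
      assume "x = p" "y = b" then show False using q1c nba d pn by auto
    next
      assume "x = c" "y = a" then show False using q2p d pn by auto
    next
      assume "x = a" "y = c" then show False using q2p d pn by auto
    next
      assume "x = c" "y = p" then show False using q1a b(7) d pn by auto
    next
      assume "x = p" "y = c" then show False using q3 ep(3) b(7) d pn by auto
    qed
  qed
qed

lemma H3_notQ4:
  assumes sg: "simple_graph V E" and H: "famH3 V E" and q: "Q4 V E x y"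
  shows False
proof -
  note g = sgE[OF sg]
  note cov = Q4_cov[OF sg q]
  obtain a b Va Vab where b: "a \<in> V" "b \<in> V" "a \<noteq> b" "\<not> E a b"
    and a1: "attached V E {a, b} Va {a}" and a2: "attached V E {a, b} Vab {a, b}"
    and ne: "Va \<noteq> {}" "Vab \<noteq> {}"
    using H unfolding famH3_def by blast
  have e1: "\<And>v u. v \<in> Va \<Longrightarrow> E v u \<longleftrightarrow> u = a" using attE[OF sg a1] b by auto
  have e2: "\<And>v u. v \<in> Vab \<Longrightarrow> E v u \<longleftrightarrow> u = a \<or> u = b" using attE[OF sg a2] b by auto
  obtain l w where l: "l \<in> Va" and w: "w \<in> Vab" using ne by blast
  have ln: "l \<noteq> a" "l \<noteq> b" "l \<in> V" using l att_sub[OF a1] by auto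
  have wn: "w \<noteq> a" "w \<noteq> b" "w \<in> V" using w att_sub[OF a2] by auto
  have el: "E l a" "\<not> E l b" "\<not> E l w" using e1[OF l] b(3) wn(1) by auto
  have ew: "E w a" "E w b" using e2[OF w] by auto
  have lw: "l \<noteq> w" using el(2) ew(2) by auto
  have nn: "\<not> E b l" "\<not> E w l" "\<not> E b a" using el(2) el(3) b(4) g(2) by blast+
  have xy: "x \<noteq> y" and Q1: "\<forall>v\<in>V-{x,y}. E v x"
    and Q3: "E x y \<or> (\<forall>v\<in>V-{x,y}. E v y)"
    using q unfolding Q4_def S32_def by auto
  have q1: "\<And>v. v \<in> V \<Longrightarrow> v \<noteq> x \<Longrightarrow> v \<noteq> y \<Longrightarrow> E v x" using Q1 by blast
  have q3: "E x y \<or> ((b \<noteq> x \<longrightarrow> b \<noteq> y \<longrightarrow> E b y) \<and> (l \<noteq> x \<longrightarrow> l \<noteq> y \<longrightarrow> E l y))" using Q3 b(2) ln(3) by blast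
  have c1: "l = x \<or> l = y \<or> a = x \<or> a = y" using cov[OF el(1)] .
  have c2: "w = x \<or> w = y \<or> b = x \<or> b = y" using cov[OF ew(2)] .
  have "(x = l \<and> y = w) \<or> (x = w \<and> y = l) \<or> (x = l \<and> y = b) \<or> (x = b \<and> y = l)
       \<or> (x = a \<and> y = w) \<or> (x = w \<and> y = a) \<or> (x = a \<and> y = b) \<or> (x = b \<and> y = a)"
    using c1 c2 xy b(3) ln wn lw by blast
  then show False
  proof (elim disjE conjE)
    assume "x = l" "y = w" then show False using q1[OF b(2)] nn b(3) ln wn by auto
  next
    assume "x = w" "y = l" then show False using q3 nn ln wn b(3) by auto
  next
    assume "x = l" "y = b" then show False using q1[OF wn(3)] nn ln wn lw by auto
  next
    assume "x = b" "y = l" then show False using q1[OF b(1)] b(4) ln b(3) by auto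
  next
    assume "x = a" "y = w" then show False using q1[OF b(2)] nn b(3) wn by auto
  next
    assume "x = w" "y = a" then show False using q1[OF ln(3)] el(3) ln lw by auto
  next
    assume "x = a" "y = b" then show False using q3 b(4) el(2) ln by auto
  next
    assume "x = b" "y = a" then show False using q1[OF ln(3)] el(2) ln by auto
  qed
qed


lemma famG_not_star:
  assumes sg: "simple_graph V E" and G: "famG V E" and st: "is_star V E"
  shows False
proof -
  note g = sgE[OF sg]
  obtain v1 v2 L W where b: "v1 \<in> V" "v2 \<in> V" "v1 \<noteq> v2"
    and aW: "attached V E {v1, v2} W {v1, v2}"
    and c: "(E v1 v2 \<and> L \<noteq> {} \<and> W \<noteq> {}) \<or> (E v1 v2 \<and> L = {} \<and> W \<noteq> {}) \<or> (\<not> E v1 v2 \<and> L = {} \<and> card W \<ge> 2)"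
    using G unfolding famG_def by blast
  have eW: "\<And>v u. v \<in> W \<Longrightarrow> E v u \<longleftrightarrow> u = v1 \<or> u = v2" using attE[OF sg aW] b by auto
  have sW: "W \<subseteq> V - {v1,v2}" using att_sub[OF aW] .
  obtain c0 where c0: "c0 \<in> V" "\<forall>v\<in>V-{c0}. nbr V E v = {c0}" using st unfolding is_star_def by blast
  have ec: "\<And>v u. v \<in> V \<Longrightarrow> v \<noteq> c0 \<Longrightarrow> E v u \<longleftrightarrow> u = c0"
  proof -
    fix v u assume "v \<in> V" "v \<noteq> c0"
    then have "nbr V E v = {c0}" using c0 by blast
    moreover have "{c0} \<subseteq> V" using c0 by simp
    ultimately show "E v u \<longleftrightarrow> u = c0" using nbr_eq_iff[OF sg, of "{c0}" v] by simp
  qed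
  have bad: "w \<noteq> c0 \<Longrightarrow> w \<in> W \<Longrightarrow> False" for w
  proof -
    assume "w \<noteq> c0" "w \<in> W"
    then have "E w v1" "E w v2" "w \<in> V" using eW sW by auto
    then show False using ec[of w] \<open>w \<noteq> c0\<close> b(3) by auto
  qed
  show False
  proof (cases "E v1 v2")
    case True
    then have "W \<noteq> {}" using c by blast
    then obtain w where w: "w \<in> W" by blast
    then have wc: "w = c0" using bad by blast
    have "v1 \<noteq> c0" using w wc sW by auto
    then have "v2 = c0" using ec[OF b(1)] True by blast
    then show False using w wc sW by auto
  next
    case False
    then have "card W \<ge> 2" using c by blast
    then obtain w1 w2 where "w1 \<in> W" "w2 \<in> W" "w1 \<noteq> w2" using card2E by blast
    then show False using bad[of w1] bad[of w2] by auto
  qed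
qed

lemma star_Q4:
  assumes sg: "simple_graph V E" and st: "is_star V E" and card: "card V \<ge> 3"
  shows "\<exists>x y. Q4 V E x y"
proof -
  obtain c0 where c0: "c0 \<in> V" "\<forall>v\<in>V-{c0}. nbr V E v = {c0}" using st unfolding is_star_def by blast
  have ec: "\<And>v u. v \<in> V \<Longrightarrow> v \<noteq> c0 \<Longrightarrow> E v u \<longleftrightarrow> u = c0"
  proof -
    fix v u assume "v \<in> V" "v \<noteq> c0"
    then have "nbr V E v = {c0}" using c0 by blast
    moreover have "{c0} \<subseteq> V" using c0 by simp
    ultimately show "E v u \<longleftrightarrow> u = c0" using nbr_eq_iff[OF sg, of "{c0}" v] by simp
  qed
  have "V - {c0} \<noteq> {}"
  proof
    assume "V - {c0} = {}"
    then have "V \<subseteq> {c0}" by blast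
    then have "card V \<le> 1" using card_mono[of "{c0}" V] by simp
    then show False using card by simp
  qed
  then obtain y where y: "y \<in> V" "y \<noteq> c0" by blast
  have "S32 V E c0 y" unfolding S32_def using c0(1) y ec by auto
  moreover have "E c0 y" using sgE(2)[OF sg] ec[OF y] by blast
  ultimately show ?thesis unfolding Q4_def by blast
qed

lemma notQ4:
  assumes sg: "simple_graph V E" and H: "famH1 V E \<or> famH2 V E \<or> famH3 V E \<or> famH4 V E \<or> famH5 V E \<or> famH6 V E"
    and q: "Q4 V E x y"
  shows False
  using H H1_notQ4[OF sg _ q] H2_notQ4[OF sg _ q] H3_notQ4[OF sg _ q] H4_notQ4[OF sg _ q]
    H5_notQ4[OF sg _ q] H6_notQ4[OF sg _ q] by blast

theorem proposition1:
  fixes V :: "'a set" and E :: "'a \<Rightarrow> 'a \<Rightarrow> bool"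
  assumes "simple_graph V E" and "connected_graph V E" and "card V \<ge> 3"
  shows "(gamma_oidR V E = 3 \<longleftrightarrow> is_star V E)
       \<and> (gamma_oidR V E = 4 \<longleftrightarrow> famG V E)
       \<and> (gamma_oidR V E = 5 \<longleftrightarrow> famH1 V E \<or> famH2 V E \<or> famH3 V E \<or> famH4 V E \<or> famH5 V E \<or> famH6 V E)"
proof -
  note sg = assms(1) and con = assms(2) and card = assms(3)
  have fin: "finite V" using sgE(1)[OF sg] .
  obtain f where fo: "oidrd V E f" "sum f V = gamma_oidR V E" using gamma_attained[OF fin] by blast
  interpret oid V E f using sg fo(1) by unfold_locales
  note st = struct_main[OF card, unfolded fo(2)]
  define \<gamma> where "\<gamma> = gamma_oidR V E"
  have L: "\<gamma> \<ge> 3" using st unfolding \<gamma>_def by blast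
  have A3: "\<gamma> \<le> 3 \<Longrightarrow> is_star V E" using st unfolding \<gamma>_def by blast
  have A4: "\<gamma> \<le> 4 \<Longrightarrow> is_star V E \<or> famG V E"
  proof -
    assume "\<gamma> \<le> 4"
    then have "is_star V E \<or> (\<exists>x y. S32 V E x y \<and> E x y) \<or> (\<exists>x y. S22 V E x y)" using st unfolding \<gamma>_def by blast
    then show ?thesis using SG_fam[OF sg] S22_fam[OF sg _ card] by blast
  qed
  have A4Q: "\<gamma> \<le> 4 \<Longrightarrow> \<exists>x y. Q4 V E x y"
  proof -
    assume "\<gamma> \<le> 4"
    then have "is_star V E \<or> (\<exists>x y. S32 V E x y \<and> E x y) \<or> (\<exists>x y. S22 V E x y)" using st unfolding \<gamma>_def by blast
    moreover have "S22 V E x y \<Longrightarrow> Q4 V E x y" for x y unfolding Q4_def using S22_S32[of V E x y] unfolding S22_def by blast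
    moreover have "S32 V E x y \<Longrightarrow> E x y \<Longrightarrow> Q4 V E x y" for x y unfolding Q4_def by blast
    ultimately show ?thesis using star_Q4[OF sg _ card] by blast
  qed
  have A5: "\<gamma> \<le> 5 \<Longrightarrow> is_star V E \<or> famG V E \<or> famH1 V E \<or> famH2 V E \<or> famH3 V E \<or> famH4 V E \<or> famH5 V E \<or> famH6 V E"
  proof -
    assume "\<gamma> \<le> 5"
    then have "is_star V E \<or> (\<exists>x y. S32 V E x y) \<or> (\<exists>x y. S22 V E x y)
          \<or> (\<exists>x y z. S311 V E x y z) \<or> (\<exists>x y z. S221 V E x y z)" using st unfolding \<gamma>_def by blast
    then show ?thesis
      using S32_fam[OF sg _ card con] S22_fam[OF sg _ card] S311_fam[OF sg] S221_fam[OF sg _ card con] by blast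
  qed
  have Bs: "is_star V E \<Longrightarrow> \<gamma> \<le> 3" using cons_star[OF sg] unfolding \<gamma>_def by blast
  have BG: "famG V E \<Longrightarrow> \<gamma> \<le> 4"
    using famG_struct[OF sg] cons_SG[OF sg] cons_S22[OF sg] unfolding \<gamma>_def by blast
  have BH: "famH1 V E \<or> famH2 V E \<or> famH3 V E \<or> famH4 V E \<or> famH5 V E \<or> famH6 V E \<Longrightarrow> \<gamma> \<le> 5"
  proof -
    assume H: "famH1 V E \<or> famH2 V E \<or> famH3 V E \<or> famH4 V E \<or> famH5 V E \<or> famH6 V E"
    consider "famH1 V E \<or> famH2 V E" | "famH3 V E" | "famH4 V E \<or> famH5 V E \<or> famH6 V E" using H by blast
    then show "\<gamma> \<le> 5"
    proof cases
      case 1 then show ?thesis using famH12_struct[OF sg] cons_S311[OF sg] unfolding \<gamma>_def by blast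
    next
      case 2 then show ?thesis using famH3_struct[OF sg] cons_S32[OF sg] unfolding \<gamma>_def by blast
    next
      case 3 then show ?thesis using famH456_struct[OF sg] cons_S221[OF sg] unfolding \<gamma>_def by blast
    qed
  qed
  have XG: "famG V E \<Longrightarrow> \<not> is_star V E" using famG_not_star[OF sg] by blast
  have XH: "famH1 V E \<or> famH2 V E \<or> famH3 V E \<or> famH4 V E \<or> famH5 V E \<or> famH6 V E \<Longrightarrow> \<not> (\<exists>x y. Q4 V E x y)"
    using notQ4[OF sg] by blast
  have i: "\<gamma> = 3 \<longleftrightarrow> is_star V E" using A3 Bs L by fastforce
  have ii: "\<gamma> = 4 \<longleftrightarrow> famG V E"
  proof
    assume "\<gamma> = 4"
    then show "famG V E" using A4 Bs by fastforce
  next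
    assume G: "famG V E"
    then have "\<gamma> \<le> 4" using BG by blast
    moreover have "\<gamma> \<noteq> 3" using G XG A3 by fastforce
    ultimately show "\<gamma> = 4" using L by linarith
  qed
  have iii: "\<gamma> = 5 \<longleftrightarrow> famH1 V E \<or> famH2 V E \<or> famH3 V E \<or> famH4 V E \<or> famH5 V E \<or> famH6 V E"
  proof
    assume g5: "\<gamma> = 5"
    then have "\<not> is_star V E" "\<not> famG V E" using Bs BG by fastforce+
    then show "famH1 V E \<or> famH2 V E \<or> famH3 V E \<or> famH4 V E \<or> famH5 V E \<or> famH6 V E" using A5 g5 by blast
  next
    assume H: "famH1 V E \<or> famH2 V E \<or> famH3 V E \<or> famH4 V E \<or> famH5 V E \<or> famH6 V E"
    then have "\<gamma> \<le> 5" using BH by blast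
    moreover have "\<not> \<gamma> \<le> 4" using H XH A4Q by blast
    ultimately show "\<gamma> = 5" by linarith
  qed
  show ?thesis using i ii iii unfolding \<gamma>_def by blast
qed


end
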